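(* Let $0<\sigma<1$ and let $\mathcal T_\bullet$ be a mesh of $\Gamma$ satisfying (M4). Then there is $C>0$, depending only on $d$, $\sigma$, $\Gamma$ and $C_{\rm cent}$, such that for all $v\in H^\sigma(\Gamma)^D$ $$\|v\|_{H^\sigma(\Gamma)}^2\le\sum_{T\in\mathcal T_\bullet}\sum_{T'\in\Pi_\bullet(T)}|v|_{H^\sigma(T\cup T')}^2+C\sum_{T\in\mathcal T_\bullet}{\rm diam}(T)^{-2\sigma}\|v\|_{L^2(T)}^2.$$
   Context: $d\ge2$, $\Omega\subset\mathbb R^d$ bounded Lipschitz, $\Gamma=\partial\Omega$, $D\ge1$. For measurable $\omega\subseteq\Gamma$: $|v|_{H^\sigma(\omega)}^2=\sum_j\int_\omega\int_\omega\frac{|v_j(x)-v_j(y)|^2}{|x-y|^{d-1+2\sigma}}dxdy$ and $\|v\|_{H^\sigma(\omega)}^2=\|v\|^2_{L^2(\omega)}+|v|^2_{H^\sigma(\omega)}$. A mesh $\mathcal T_\bullet$ is a finite set of compact sets $T=\gamma_T(\widehat T)\subseteq\Gamma$ ($\widehat T$ a compact Lipschitz domain in $\mathbb R^{d-1}$, $\gamma_T$ bi-Lipschitz) covering $\Gamma$ with pairwise intersections of measure zero. $\pi_\bullet(T)=\bigcup\{T'\in\mathcal T_\bullet:T'\cap T\ne\emptyset\}$, $\Pi_\bullet(T)=\{T'\in\mathcal T_\bullet:T'\cap T\ne\emptyset\}$. (M4): ${\rm diam}(T)\le C_{\rm cent}{\rm dist}(T,\Gamma\setminus\pi_\bullet(T))$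 for all $T\in\mathcal T_\bullet$ (with ${\rm dist}(T,\emptyset)={\rm diam}(\Gamma)$). *)

theory Defs
  imports "HOL-Analysis.Analysis"
begin

text \<open>A bounded open set whose boundary is locally the graph of a Lipschitz function:
  near every boundary point x there is a unit direction e, a radius r and a Lipschitz
  function g (only its values on the hyperplane orthogonal to e matter) such that,
  inside the ball, the set is the strict subgraph of g in direction e.\<close>

definition lipschitz_boundary :: "'a::euclidean_space set \<Rightarrow> bool" where
  "lipschitz_boundary \<Omega> \<longleftrightarrow>
     (\<forall>x\<in>frontier \<Omega>. \<exists>e r L g. norm e = 1 \<and> r > 0 \<and> L-lipschitz_on UNIV g \<and>
        \<Omega> \<inter> ball x r = {y \<in> ball x r. y \<bullet> e < g (y - (y \<bullet> e) *\<^sub>R e)})"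

definition bounded_lipschitz_domain :: "'a::euclidean_space set \<Rightarrow> bool" where
  "bounded_lipschitz_domain \<Omega> \<longleftrightarrow> open \<Omega> \<and> bounded \<Omega> \<and> \<Omega> \<noteq> {} \<and> lipschitz_boundary \<Omega>"

definition compact_lipschitz_domain :: "'a::euclidean_space set \<Rightarrow> bool" where
  "compact_lipschitz_domain K \<longleftrightarrow> (\<exists>U. bounded_lipschitz_domain U \<and> K = closure U)"

definition bi_lipschitz_on :: "'a::metric_space set \<Rightarrow> ('a \<Rightarrow> 'b::metric_space) \<Rightarrow> bool" where
  "bi_lipschitz_on X f \<longleftrightarrow> (\<exists>L>0. \<forall>x\<in>X. \<forall>y\<in>X.
      dist x y \<le> L * dist (f x) (f y) \<and> dist (f x) (f y) \<le> L * dist x y)"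

definition hausdorff_normalization :: "real \<Rightarrow> real" where
  "hausdorff_normalization s = pi powr (s / 2) / (Gamma (s / 2 + 1) * 2 powr s)"

definition hausdorff_premeasure :: "real \<Rightarrow> real \<Rightarrow> 'a::metric_space set \<Rightarrow> ennreal" where
  "hausdorff_premeasure s \<delta> A =
     (INF C \<in> {C :: nat \<Rightarrow> 'a set. A \<subseteq> (\<Union>i. C i) \<and> (\<forall>i. diameter (C i) \<le> \<delta>)}.
        (\<Sum>i. ennreal (hausdorff_normalization s * diameter (C i) powr s)))"

definition hausdorff_measure :: "real \<Rightarrow> 'a::metric_space set \<Rightarrow> ennreal" where
  "hausdorff_measure s A = (SUP \<delta> \<in> {0<..}. hausdorff_premeasure s \<delta> A)"

definition surface_measure :: "'a::euclidean_space set \<Rightarrow> 'a measure" where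
  "surface_measure \<Gamma> = measure_of \<Gamma> {A. A \<subseteq> \<Gamma> \<and> A \<in> sets borel}
      (hausdorff_measure (real DIM('a) - 1))"

definition L2_sq :: "'a::euclidean_space set \<Rightarrow> nat \<Rightarrow> ('a \<Rightarrow> nat \<Rightarrow> real) \<Rightarrow> 'a set \<Rightarrow> ennreal" where
  "L2_sq \<Gamma> D v \<omega> = (\<Sum>j<D. \<integral>\<^sup>+ x. indicator \<omega> x * ennreal ((v x j)\<^sup>2) \<partial>surface_measure \<Gamma>)"

definition Hs_semi_sq :: "'a::euclidean_space set \<Rightarrow> real \<Rightarrow> nat \<Rightarrow> ('a \<Rightarrow> nat \<Rightarrow> real) \<Rightarrow> 'a set \<Rightarrow> ennreal" where
  "Hs_semi_sq \<Gamma> \<sigma> D v \<omega> = (\<Sum>j<D. \<integral>\<^sup>+ p. indicator (\<omega> \<times> \<omega>) p *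
       ennreal ((v (fst p) j - v (snd p) j)\<^sup>2 /
                dist (fst p) (snd p) powr (real DIM('a) - 1 + 2 * \<sigma>))
     \<partial>(surface_measure \<Gamma> \<Otimes>\<^sub>M surface_measure \<Gamma>))"

definition Hs_norm_sq :: "'a::euclidean_space set \<Rightarrow> real \<Rightarrow> nat \<Rightarrow> ('a \<Rightarrow> nat \<Rightarrow> real) \<Rightarrow> 'a set \<Rightarrow> ennreal" where
  "Hs_norm_sq \<Gamma> \<sigma> D v \<omega> = L2_sq \<Gamma> D v \<omega> + Hs_semi_sq \<Gamma> \<sigma> D v \<omega>"

definition in_Hs :: "'a::euclidean_space set \<Rightarrow> real \<Rightarrow> nat \<Rightarrow> ('a \<Rightarrow> nat \<Rightarrow> real) \<Rightarrow> bool" where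
  "in_Hs \<Gamma> \<sigma> D v \<longleftrightarrow> (\<forall>j<D. (\<lambda>x. v x j) \<in> borel_measurable (surface_measure \<Gamma>)) \<and>
      Hs_norm_sq \<Gamma> \<sigma> D v \<Gamma> < \<infinity>"

definition is_mesh :: "'b::euclidean_space itself \<Rightarrow> 'a::euclidean_space set \<Rightarrow> 'a set set \<Rightarrow> bool" where
  "is_mesh _ \<Gamma> \<T> \<longleftrightarrow> finite \<T> \<and> \<Union>\<T> = \<Gamma> \<and>
     (\<forall>T\<in>\<T>. compact T \<and> T \<subseteq> \<Gamma> \<and>
        (\<exists>(That :: 'b set) \<gamma>. compact_lipschitz_domain That \<and> bi_lipschitz_on That \<gamma> \<and> T = \<gamma> ` That)) \<and>
     (\<forall>T\<in>\<T>. \<forall>T'\<in>\<T>. T \<noteq> T' \<longrightarrow> emeasure (surface_measure \<Gamma>) (T \<inter> T') = 0)"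

definition patch_elems :: "'a set set \<Rightarrow> 'a set \<Rightarrow> 'a set set" where
  "patch_elems \<T> T = {T' \<in> \<T>. T' \<inter> T \<noteq> {}}"

definition patch :: "'a set set \<Rightarrow> 'a set \<Rightarrow> 'a set" where
  "patch \<T> T = \<Union>(patch_elems \<T> T)"

definition dist_set :: "'a::euclidean_space set \<Rightarrow> 'a set \<Rightarrow> 'a set \<Rightarrow> real" where
  "dist_set \<Gamma> A B = (if B = {} then diameter \<Gamma> else setdist A B)"

definition M4 :: "'a::euclidean_space set \<Rightarrow> real \<Rightarrow> 'a set set \<Rightarrow> bool" where
  "M4 \<Gamma> Ccent \<T> \<longleftrightarrow> (\<forall>T\<in>\<T>. diameter T \<le> Ccent * dist_set \<Gamma> T (\<Gamma> - patch \<T> T))"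

end

theory Submission
  imports Defs
begin

lemma hp_le_family:
  fixes A :: "'a::metric_space set"
  assumes fin: "finite F" and cov: "A \<subseteq> \<Union>F" and diam: "\<forall>S\<in>F. diameter S \<le> \<delta>" and d0: "0 \<le> \<delta>"
  shows "hausdorff_premeasure s \<delta> A \<le> (\<Sum>S\<in>F. ennreal (hausdorff_normalization s * diameter S powr s))"
proof -
  obtain h where h: "bij_betw h {0..<card F} F" using ex_bij_betw_nat_finite[OF fin] by blast
  have him: "h ` {0..<card F} = F" using h by (simp add: bij_betw_imp_surj_on)
  define C where "C i = (if i < card F then h i else {})" for i
  have covC: "A \<subseteq> (\<Union>i. C i)"
  proof
    fix x assume "x \<in> A"
    then obtain S where S: "S \<in> F" "x \<in> S" using cov by blast
    then obtain i where i: "i \<in> {0..<card F}" "S = h i" using him by blast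
    then have "C i = S" by (simp add: C_def)
    then show "x \<in> (\<Union>i. C i)" using S(2) by blast
  qed
  have dC: "\<forall>i. diameter (C i) \<le> \<delta>"
  proof
    fix i show "diameter (C i) \<le> \<delta>"
    proof (cases "i < card F")
      case True
      then have "h i \<in> F" using him by auto
      then show ?thesis using True diam by (simp add: C_def)
    qed (simp add: C_def d0)
  qed
  have "hausdorff_premeasure s \<delta> A \<le> (\<Sum>i. ennreal (hausdorff_normalization s * diameter (C i) powr s))"
    unfolding hausdorff_premeasure_def by (rule INF_lower) (simp add: covC dC)
  also have "\<dots> = (\<Sum>i<card F. ennreal (hausdorff_normalization s * diameter (C i) powr s))"
    by (rule suminf_finite) (simp_all add: C_def)
  also have "\<dots> = (\<Sum>i\<in>{0..<card F}. ennreal (hausdorff_normalization s * diameter (h i) powr s))"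
    by (intro sum.cong) (auto simp: C_def)
  also have "\<dots> = (\<Sum>S\<in>F. ennreal (hausdorff_normalization s * diameter S powr s))"
    by (rule sum.reindex_bij_betw[OF h])
  finally show ?thesis .
qed

lemma hm_le_family:
  fixes A :: "'a::metric_space set"
  assumes "\<And>\<delta>. \<delta> > 0 \<Longrightarrow> \<exists>F. finite F \<and> A \<subseteq> \<Union>F \<and> (\<forall>S\<in>F. diameter S \<le> \<delta>) \<and>
              (\<Sum>S\<in>F. hausdorff_normalization s * diameter S powr s) \<le> B"
    and "0 \<le> hausdorff_normalization s"
  shows "hausdorff_measure s A \<le> ennreal B"
  unfolding hausdorff_measure_def
proof (rule SUP_least)
  fix \<delta> :: real assume d: "\<delta> \<in> {0<..}"
  then obtain F where F: "finite F" "A \<subseteq> \<Union>F" "\<forall>S\<in>F. diameter S \<le> \<delta>"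
    "(\<Sum>S\<in>F. hausdorff_normalization s * diameter S powr s) \<le> B" using assms(1)[of \<delta>] by auto
  have "hausdorff_premeasure s \<delta> A \<le> (\<Sum>S\<in>F. ennreal (hausdorff_normalization s * diameter S powr s))"
    using hp_le_family[OF F(1-3)] d by simp
  also have "\<dots> = ennreal (\<Sum>S\<in>F. hausdorff_normalization s * diameter S powr s)"
    using assms(2) by (intro sum_ennreal) simp
  also have "\<dots> \<le> ennreal B" using F(4) by (rule ennreal_leI)
  finally show "hausdorff_premeasure s \<delta> A \<le> ennreal B" .
qed

lemma hnorm_pos: "s \<ge> 0 \<Longrightarrow> hausdorff_normalization s > 0"
  unfolding hausdorff_normalization_def
  by (intro divide_pos_pos mult_pos_pos) (auto intro!: Gamma_real_pos)

lemma parseval_basis: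
  fixes e :: "'a::euclidean_space"
  assumes "norm e = 1"
  obtains B where "finite B" "card B = DIM('a) - 1" "e \<notin> B"
    "\<And>w::'a. w \<bullet> w = (w \<bullet> e)\<^sup>2 + (\<Sum>i\<in>B. (w \<bullet> i)\<^sup>2)"
    "\<And>i. i \<in> B \<Longrightarrow> norm i = 1"
proof -
  obtain S where S: "e \<in> S" "pairwise orthogonal S" "\<And>x. x \<in> S \<Longrightarrow> norm x = 1"
    "independent S" "card S = DIM('a)" "span S = UNIV"
    using vector_in_orthonormal_basis[OF assms] by blast
  have fin: "finite S" using S(5) DIM_positive card_gt_0_iff by metis
  have pars: "w \<bullet> w = (\<Sum>i\<in>S. (w \<bullet> i)\<^sup>2)" for w :: 'a
  proof -
    have "(\<Sum>i\<in>S. (w \<bullet> i) *\<^sub>R i) = w"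
      using orthonormal_basis_expand[OF S(2) S(3)] S(6) fin by auto
    then have "w \<bullet> w = w \<bullet> (\<Sum>i\<in>S. (w \<bullet> i) *\<^sub>R i)" by simp
    also have "\<dots> = (\<Sum>i\<in>S. (w \<bullet> i)\<^sup>2)"
      by (simp add: inner_sum_right power2_eq_square)
    finally show ?thesis .
  qed
  show thesis
  proof
    show "finite (S - {e})" using fin by simp
    show "card (S - {e}) = DIM('a) - 1" using S(1,5) fin by simp
    show "e \<notin> S - {e}" by simp
    show "w \<bullet> w = (w \<bullet> e)\<^sup>2 + (\<Sum>i\<in>S - {e}. (w \<bullet> i)\<^sup>2)" for w :: 'a
      using pars[of w] sum.remove[OF fin S(1), of "\<lambda>i. (w \<bullet> i)\<^sup>2"] by simp
    show "\<And>i. i \<in> S - {e} \<Longrightarrow> norm i = 1" using S(3) by simp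
  qed
qed

lemma graph_cover:
  fixes e c :: "'a::euclidean_space" and g :: "'a \<Rightarrow> real"
  assumes dim: "DIM('a) \<ge> 2" and e1: "norm e = 1" and lip: "L-lipschitz_on UNIV g"
    and rho: "\<rho> > 0" and del: "\<delta> > 0" and hn: "hn \<ge> 0"
  defines "s \<equiv> real DIM('a) - 1"
  shows "\<exists>F. finite F \<and> {y. y \<bullet> e = g (y - (y \<bullet> e) *\<^sub>R e)} \<inter> cball c \<rho> \<subseteq> \<Union>F \<and>
          (\<forall>S\<in>F. diameter S \<le> \<delta>) \<and>
          (\<Sum>S\<in>F. hn * diameter S powr s) \<le> hn * (6 * (1 + L) * sqrt s) powr s * \<rho> powr s"
proof -
  obtain B where B: "finite B" "card B = DIM('a) - 1" "e \<notin> B"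
    "\<And>w::'a. w \<bullet> w = (w \<bullet> e)\<^sup>2 + (\<Sum>i\<in>B. (w \<bullet> i)\<^sup>2)"
    "\<And>i. i \<in> B \<Longrightarrow> norm i = 1"
    using parseval_basis[OF e1] by blast
  define n where "n = DIM('a) - 1"
  have n1: "n \<ge> 1" using dim by (simp add: n_def)
  have sn: "s = real n" using dim by (simp add: s_def n_def)
  have L0: "L \<ge> 0" using lip by (simp add: lipschitz_on_def)
  define G where "G = {y. y \<bullet> e = g (y - (y \<bullet> e) *\<^sub>R e)}"
  define D0 where "D0 = (1 + L) * sqrt s"
  have D0pos: "D0 > 0" using L0 n1 sn by (simp add: D0_def)
  define \<epsilon> where "\<epsilon> = min \<rho> (\<delta> / D0)"
  have epos: "\<epsilon> > 0" using rho del D0pos by (simp add: \<epsilon>_def)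
  define m :: int where "m = \<lceil>\<rho> / \<epsilon>\<rceil> + 1"
  have m1: "m \<ge> 1"
  proof -
    have "0 < \<rho> / \<epsilon>" using rho epos by simp
    then show ?thesis by (simp add: m_def)
  qed
  define K where "K = PiE B (\<lambda>_. {-m..<m})"
  define Q where "Q k = {y \<in> G. \<forall>i\<in>B. k i * \<epsilon> \<le> (y - c) \<bullet> i \<and> (y - c) \<bullet> i \<le> (k i + 1) * \<epsilon>}" for k :: "'a \<Rightarrow> int"
  have finK: "finite K" using B(1) by (simp add: K_def finite_PiE)
  have cardK: "real (card K) = real_of_int (2 * m) ^ n"
  proof -
    have "card K = (\<Prod>i\<in>B. card {-m..<m})" by (simp add: K_def card_PiE B(1))
    also have "\<dots> = nat (2 * m) ^ n" using B(2) by (simp add: n_def)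
    finally show ?thesis using m1 by simp
  qed
  have cover: "G \<inter> cball c \<rho> \<subseteq> \<Union>(Q ` K)"
  proof
    fix y assume y: "y \<in> G \<inter> cball c \<rho>"
    define k where "k = restrict (\<lambda>i. \<lfloor>((y - c) \<bullet> i) / \<epsilon>\<rfloor>) B"
    have bnd: "\<bar>(y - c) \<bullet> i\<bar> \<le> \<rho>" if "i \<in> B" for i
    proof -
      have "\<bar>(y - c) \<bullet> i\<bar> \<le> norm (y - c) * norm i" by (rule Cauchy_Schwarz_ineq2)
      also have "\<dots> = norm (y - c)" using B(5)[OF that] by simp
      also have "\<dots> \<le> \<rho>" using y by (simp add: dist_norm norm_minus_commute)
      finally show ?thesis .
    qed
    have "k \<in> K"
    proof -
      have "\<lfloor>((y - c) \<bullet> i) / \<epsilon>\<rfloor> \<in> {-m..<m}" if "i \<in> B" for i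
      proof -
        have a: "-\<rho> \<le> (y - c) \<bullet> i" "(y - c) \<bullet> i \<le> \<rho>" using bnd[OF that] by auto
        have "-(\<rho> / \<epsilon>) \<le> ((y - c) \<bullet> i) / \<epsilon>" using a(1) epos by (simp add: field_simps)
        then have "\<lfloor>-(\<rho> / \<epsilon>)\<rfloor> \<le> \<lfloor>((y - c) \<bullet> i) / \<epsilon>\<rfloor>" by (rule floor_mono)
        moreover have "\<lfloor>-(\<rho> / \<epsilon>)\<rfloor> = - \<lceil>\<rho> / \<epsilon>\<rceil>" by (simp add: ceiling_def)
        moreover have "((y - c) \<bullet> i) / \<epsilon> \<le> \<rho> / \<epsilon>" using a(2) epos by (simp add: divide_right_mono)
        then have "\<lfloor>((y - c) \<bullet> i) / \<epsilon>\<rfloor> \<le> \<lceil>\<rho> / \<epsilon>\<rceil>"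
          by (meson floor_le_ceiling floor_mono order_trans)
        ultimately show ?thesis by (simp add: m_def)
      qed
      then show ?thesis by (simp add: K_def k_def)
    qed
    moreover have "y \<in> Q k"
    proof -
      have "k i * \<epsilon> \<le> (y - c) \<bullet> i \<and> (y - c) \<bullet> i \<le> (k i + 1) * \<epsilon>" if "i \<in> B" for i
      proof -
        have kk: "k i = \<lfloor>((y - c) \<bullet> i) / \<epsilon>\<rfloor>" using that by (simp add: k_def)
        have f1: "real_of_int (k i) \<le> ((y - c) \<bullet> i) / \<epsilon>" unfolding kk by (rule of_int_floor_le)
        have f2: "((y - c) \<bullet> i) / \<epsilon> < real_of_int (k i) + 1" unfolding kk by (rule real_of_int_floor_add_one_gt)
        show ?thesis using f1 f2 epos by (simp add: field_simps)
      qed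
      then show ?thesis using y by (simp add: Q_def)
    qed
    ultimately show "y \<in> \<Union>(Q ` K)" by blast
  qed
  have dist_bound: "norm (y - z) \<le> D0 * \<epsilon>" if "y \<in> Q k" "z \<in> Q k" for y z k
  proof -
    define w where "w = y - z"
    have wi: "(w \<bullet> i)\<^sup>2 \<le> \<epsilon>\<^sup>2" if "i \<in> B" for i
    proof -
      have "w \<bullet> i = (y - c) \<bullet> i - (z - c) \<bullet> i" by (simp add: w_def inner_diff_left)
      moreover have "k i * \<epsilon> \<le> (y - c) \<bullet> i" "(y - c) \<bullet> i \<le> (k i + 1) * \<epsilon>"
        "k i * \<epsilon> \<le> (z - c) \<bullet> i" "(z - c) \<bullet> i \<le> (k i + 1) * \<epsilon>"
        using \<open>y \<in> Q k\<close> \<open>z \<in> Q k\<close> that unfolding Q_def by blast+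
      ultimately have "\<bar>w \<bullet> i\<bar> \<le> \<epsilon>" by (simp add: algebra_simps abs_le_iff)
      then have "\<bar>w \<bullet> i\<bar> \<le> \<bar>\<epsilon>\<bar>" using epos by simp
      then show ?thesis by (simp only: abs_le_square_iff)
    qed
    define P where "P x = x - (x \<bullet> e) *\<^sub>R e" for x
    have ee: "e \<bullet> e = 1" using e1 by (simp add: norm_eq_1)
    have PP: "P w \<bullet> P w = w \<bullet> w - (w \<bullet> e)\<^sup>2"
      by (simp add: P_def inner_diff_left inner_diff_right ee power2_eq_square inner_commute)
    have "(\<Sum>i\<in>B. (w \<bullet> i)\<^sup>2) \<le> (\<Sum>i\<in>B. \<epsilon>\<^sup>2)" by (rule sum_mono) (use wi in auto)
    also have "\<dots> = s * \<epsilon>\<^sup>2" using B(2) sn by (simp add: n_def)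
    finally have Pw2: "(norm (P w))\<^sup>2 \<le> s * \<epsilon>\<^sup>2" using B(4)[of w] PP by (simp add: power2_norm_eq_inner)
    have "w \<bullet> e = g (P y) - g (P z)" using \<open>y \<in> Q k\<close> \<open>z \<in> Q k\<close>
      by (simp add: Q_def G_def P_def w_def inner_diff_left)
    also have "\<bar>\<dots>\<bar> \<le> L * dist (P y) (P z)" using lip by (simp add: lipschitz_on_def abs_minus_commute dist_real_def)
    also have "dist (P y) (P z) = norm (P w)" by (simp add: P_def w_def dist_norm algebra_simps inner_diff_left)
    finally have we: "\<bar>w \<bullet> e\<bar> \<le> L * norm (P w)" .
    have Pws: "norm (P w) \<le> sqrt s * \<epsilon>"
      using Pw2 epos sn n1 by (metis real_le_rsqrt real_sqrt_mult real_sqrt_pow2_iff power2_eq_square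
          norm_ge_zero real_sqrt_abs abs_of_pos mult.commute real_sqrt_le_iff real_sqrt_mult_self order_trans)
    have "norm w = norm (P w + (w \<bullet> e) *\<^sub>R e)" by (simp add: P_def)
    also have "\<dots> \<le> norm (P w) + \<bar>w \<bullet> e\<bar>" using norm_triangle_ineq[of "P w" "(w \<bullet> e) *\<^sub>R e"] e1 by simp
    also have "\<dots> \<le> (1 + L) * norm (P w)" using we by (simp add: algebra_simps)
    also have "\<dots> \<le> (1 + L) * (sqrt s * \<epsilon>)" using Pws L0 by (intro mult_left_mono) auto
    finally show ?thesis by (simp add: D0_def w_def mult.assoc)
  qed
  have diamQ: "diameter (Q k) \<le> D0 * \<epsilon>" for k
    by (rule diameter_le) (use dist_bound D0pos epos in auto)
  have diamQ0: "0 \<le> diameter (Q k)" for k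
  proof -
    have "bounded (Q k)" unfolding bounded_two_points using dist_bound by (metis dist_norm)
    then show ?thesis by (rule diameter_ge_0)
  qed
  have De: "D0 * \<epsilon> \<le> \<delta>" using D0pos by (simp add: \<epsilon>_def min_def field_simps)
  have "(\<Sum>S\<in>Q ` K. hn * diameter S powr s) \<le> (\<Sum>k\<in>K. hn * diameter (Q k) powr s)"
    using sum_image_le[OF finK, of "\<lambda>S. hn * diameter S powr s" Q] hn by (simp add: o_def)
  also have "\<dots> \<le> (\<Sum>k\<in>K. hn * (D0 * \<epsilon>) powr s)"
    by (intro sum_mono mult_left_mono powr_mono2) (use hn diamQ diamQ0 sn in auto)
  also have "\<dots> = hn * (real_of_int (2 * m) ^ n * (D0 * \<epsilon>) powr s)" using cardK by simp
  also have "real_of_int (2 * m) ^ n * (D0 * \<epsilon>) powr s = (real_of_int (2 * m) * (D0 * \<epsilon>)) powr s"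
    using m1 D0pos epos sn by (simp add: powr_mult powr_realpow)
  also have "\<dots> \<le> (6 * (1 + L) * sqrt s * \<rho>) powr s"
  proof (rule powr_mono2)
    have "real_of_int m * \<epsilon> \<le> 3 * \<rho>"
    proof -
      have "real_of_int \<lceil>\<rho> / \<epsilon>\<rceil> - 1 < \<rho> / \<epsilon>" using ceiling_correct by blast
      hence "real_of_int m < \<rho> / \<epsilon> + 2" by (simp add: m_def)
      hence "real_of_int m * \<epsilon> < (\<rho> / \<epsilon> + 2) * \<epsilon>" using epos by (simp only: mult_strict_right_mono)
      also have "\<dots> = \<rho> + 2 * \<epsilon>" using epos by (simp add: field_simps)
      also have "\<dots> \<le> 3 * \<rho>" by (simp add: \<epsilon>_def)
      finally show ?thesis by simp
    qed
    then have "real_of_int (2 * m) * (D0 * \<epsilon>) \<le> 2 * (3 * \<rho>) * D0" using D0pos by (simp add: algebra_simps)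
    then show "real_of_int (2 * m) * (D0 * \<epsilon>) \<le> 6 * (1 + L) * sqrt s * \<rho>" by (simp add: D0_def algebra_simps)
    show "0 \<le> real_of_int (2 * m) * (D0 * \<epsilon>)" using m1 D0pos epos by simp
  qed (use sn in simp)
  also have "(6 * (1 + L) * sqrt s * \<rho>) powr s = (6 * (1 + L) * sqrt s) powr s * \<rho> powr s"
    using L0 rho sn by (simp add: powr_mult)
  finally have sumb: "(\<Sum>S\<in>Q ` K. hn * diameter S powr s) \<le> hn * (6 * (1 + L) * sqrt s) powr s * \<rho> powr s"
    using hn by (simp add: mult_left_mono mult.assoc)
  show ?thesis
    by (rule exI[of _ "Q ` K"]) (use finK cover diamQ De sumb in \<open>auto simp: G_def intro: order_trans\<close>)
qed

lemma sum_UN_le_nonneg: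
  fixes f :: "'b \<Rightarrow> real"
  assumes "finite X" "\<And>x. x \<in> X \<Longrightarrow> finite (F x)" "\<And>S. 0 \<le> f S"
  shows "sum f (\<Union>x\<in>X. F x) \<le> (\<Sum>x\<in>X. sum f (F x))"
proof -
  have eq: "(\<Union>x\<in>X. F x) = snd ` (Sigma X F)" by force
  have fin: "finite (Sigma X F)" using assms by (intro finite_SigmaI) auto
  have "sum f (snd ` (Sigma X F)) \<le> sum (f \<circ> snd) (Sigma X F)"
    by (rule sum_image_le[OF fin]) (use assms(3) in auto)
  also have "\<dots> = (\<Sum>x\<in>X. sum f (F x))"
    using sum.Sigma[OF assms(1), of F "\<lambda>x y. f y"] assms(2) by (simp add: o_def case_prod_unfold)
  finally show ?thesis using eq by simp
qed

lemma chart_incl: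
  fixes \<Omega> :: "'a::euclidean_space set"
  assumes "open \<Omega>" "r > 0" "L-lipschitz_on UNIV g"
    and eq: "\<Omega> \<inter> ball x r = {y \<in> ball x r. y \<bullet> e < g (y - (y \<bullet> e) *\<^sub>R e)}"
  shows "frontier \<Omega> \<inter> ball x r \<subseteq> {y. y \<bullet> e = g (y - (y \<bullet> e) *\<^sub>R e)}"
proof
  fix y assume y: "y \<in> frontier \<Omega> \<inter> ball x r"
  have cg: "continuous_on UNIV g" using assms(3) by (rule lipschitz_on_continuous_on)
  have ch: "continuous_on UNIV (\<lambda>y. g (y - (y \<bullet> e) *\<^sub>R e) - y \<bullet> e)"
    by (intro continuous_intros continuous_on_compose2[OF cg]) auto
  have yO: "y \<notin> \<Omega>" using y assms(1) by (simp add: frontier_def interior_open)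
  have ycl: "y \<in> closure \<Omega>" using y by (simp add: frontier_def)
  show "y \<in> {y. y \<bullet> e = g (y - (y \<bullet> e) *\<^sub>R e)}"
  proof (rule ccontr)
    assume ne: "y \<notin> {y. y \<bullet> e = g (y - (y \<bullet> e) *\<^sub>R e)}"
    show False
    proof (cases "y \<bullet> e < g (y - (y \<bullet> e) *\<^sub>R e)")
      case True
      then have "y \<in> \<Omega> \<inter> ball x r" using eq y by blast
      then show False using yO by blast
    next
      case False
      then have gt: "g (y - (y \<bullet> e) *\<^sub>R e) - y \<bullet> e < 0" using ne by auto
      define V where "V = ball x r \<inter> {z. g (z - (z \<bullet> e) *\<^sub>R e) - z \<bullet> e < 0}"
      have "open {z. g (z - (z \<bullet> e) *\<^sub>R e) - z \<bullet> e < 0}"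
        using open_vimage[OF open_lessThan[of 0] ch] by (simp add: vimage_def)
      then have oV: "open V" by (simp add: V_def open_Int)
      have yV: "y \<in> V" using y gt by (simp add: V_def)
      have "V \<inter> \<Omega> = {}"
      proof -
        have "V \<inter> \<Omega> \<subseteq> \<Omega> \<inter> ball x r" by (auto simp: V_def)
        then show ?thesis using eq by (auto simp: V_def)
      qed
      then have "V \<inter> closure \<Omega> = {}" using open_Int_closure_eq_empty[OF oV] by blast
      then show False using ycl yV by blast
    qed
  qed
qed

lemma regularity:
  fixes \<Omega> :: "'a::euclidean_space set"
  assumes dim: "DIM('a) \<ge> 2" and bl: "bounded_lipschitz_domain \<Omega>"
  defines "s \<equiv> real DIM('a) - 1"
  shows "\<exists>A>0. \<forall>y\<in>frontier \<Omega>. \<forall>\<rho>>0. hausdorff_measure s (frontier \<Omega> \<inter> cball y \<rho>) \<le> ennreal (A * \<rho> powr s)"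
proof -
  define \<Gamma> where "\<Gamma> = frontier \<Omega>"
  have oO: "open \<Omega>" and bO: "bounded \<Omega>" and lb: "lipschitz_boundary \<Omega>"
    using bl by (auto simp: bounded_lipschitz_domain_def)
  have s0: "s \<ge> 1" using dim by (simp add: s_def)
  define hn where "hn = hausdorff_normalization s"
  have hn: "hn > 0" using hnorm_pos s0 by (simp add: hn_def)
  have ex: "\<forall>x\<in>\<Gamma>. \<exists>e r L g. norm e = 1 \<and> r > 0 \<and> L-lipschitz_on UNIV g \<and>
        \<Omega> \<inter> ball x r = {y \<in> ball x r. y \<bullet> e < g (y - (y \<bullet> e) *\<^sub>R e)}"
    using lb by (simp add: lipschitz_boundary_def \<Gamma>_def)
  have "\<forall>x\<in>\<Gamma>. \<exists>q. norm (fst q) = 1 \<and> fst (snd q) > 0 \<and> (fst (snd (snd q)))-lipschitz_on UNIV (snd (snd (snd q))) \<and>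
        \<Omega> \<inter> ball x (fst (snd q)) = {y \<in> ball x (fst (snd q)). y \<bullet> fst q < (snd (snd (snd q))) (y - (y \<bullet> fst q) *\<^sub>R fst q)}"
  proof
    fix x assume "x \<in> \<Gamma>"
    then obtain e r L g where "norm e = 1 \<and> r > 0 \<and> L-lipschitz_on UNIV g \<and>
        \<Omega> \<inter> ball x r = {y \<in> ball x r. y \<bullet> e < g (y - (y \<bullet> e) *\<^sub>R e)}" using ex by blast
    then show "\<exists>q. norm (fst q) = 1 \<and> fst (snd q) > 0 \<and> (fst (snd (snd q)))-lipschitz_on UNIV (snd (snd (snd q))) \<and>
        \<Omega> \<inter> ball x (fst (snd q)) = {y \<in> ball x (fst (snd q)). y \<bullet> fst q < (snd (snd (snd q))) (y - (y \<bullet> fst q) *\<^sub>R fst q)}"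
      by (intro exI[of _ "(e, r, L, g)"]) simp
  qed
  from bchoice[OF this] obtain QQ where QQ: "\<forall>x\<in>\<Gamma>. norm (fst (QQ x)) = 1 \<and> fst (snd (QQ x)) > 0 \<and> (fst (snd (snd (QQ x))))-lipschitz_on UNIV (snd (snd (snd (QQ x)))) \<and>
        \<Omega> \<inter> ball x (fst (snd (QQ x))) = {y \<in> ball x (fst (snd (QQ x))). y \<bullet> fst (QQ x) < (snd (snd (snd (QQ x)))) (y - (y \<bullet> fst (QQ x)) *\<^sub>R fst (QQ x))}"
    by blast
  define E where "E x = fst (QQ x)" for x
  define R where "R x = fst (snd (QQ x))" for x
  define LL where "LL x = fst (snd (snd (QQ x)))" for x
  define GG where "GG x = snd (snd (snd (QQ x)))" for x
  have ch: "\<And>x. x \<in> \<Gamma> \<Longrightarrow> norm (E x) = 1 \<and> R x > 0 \<and> (LL x)-lipschitz_on UNIV (GG x) \<and>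
        \<Omega> \<inter> ball x (R x) = {y \<in> ball x (R x). y \<bullet> E x < GG x (y - (y \<bullet> E x) *\<^sub>R E x)}"
    using QQ unfolding E_def R_def LL_def GG_def by blast
  define Gr where "Gr x = {y. y \<bullet> E x = GG x (y - (y \<bullet> E x) *\<^sub>R E x)}" for x
  have incl: "\<Gamma> \<inter> ball x (R x) \<subseteq> Gr x" if "x \<in> \<Gamma>" for x
    unfolding Gr_def \<Gamma>_def using chart_incl[OF oO, of "R x" "LL x" "GG x" x "E x"] ch[OF that] by (simp add: \<Gamma>_def)
  show ?thesis
  proof (cases "\<Gamma> = {}")
    case True
    then show ?thesis by (intro exI[of _ 1]) (simp add: \<Gamma>_def)
  next
    case False
    have cpt: "compact \<Gamma>" using bO by (simp add: \<Gamma>_def compact_frontier_bounded)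
    have "\<Gamma> \<subseteq> (\<Union>x\<in>\<Gamma>. ball x (R x / 2))"
      using ch by (auto intro!: bexI)
    then obtain X where X: "X \<subseteq> \<Gamma>" "finite X" "\<Gamma> \<subseteq> (\<Union>x\<in>X. ball x (R x / 2))"
      using compactE_image[OF cpt, of \<Gamma> "\<lambda>x. ball x (R x / 2)"] by blast
    have Xne: "X \<noteq> {}" using X(3) False by blast
    define r0 where "r0 = Min ((\<lambda>x. R x / 2) ` X)"
    have r0pos: "r0 > 0" using X ch Xne by (auto simp: r0_def)
    have r0le: "r0 \<le> R x / 2" if "x \<in> X" for x unfolding r0_def using X(2) that by (intro Min_le) auto
    define cst where "cst x = hn * (6 * (1 + LL x) * sqrt s) powr s" for x
    have cst0: "cst x \<ge> 0" for x using hn by (simp add: cst_def)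
    define A1 where "A1 = (\<Sum>x\<in>X. cst x)"
    define Htot where "Htot = (\<Sum>x\<in>X. cst x * (R x / 2) powr s)"
    have Htot0: "Htot \<ge> 0" unfolding Htot_def by (intro sum_nonneg) (simp add: cst0)
    have A10: "A1 \<ge> 0" unfolding A1_def by (intro sum_nonneg) (simp add: cst0)
    have local: "hausdorff_measure s (\<Gamma> \<inter> cball y \<rho>) \<le> ennreal (A1 * \<rho> powr s)"
      if y: "y \<in> \<Gamma>" and rho: "0 < \<rho>" "\<rho> \<le> r0" for y \<rho>
    proof -
      obtain x where x: "x \<in> X" "y \<in> ball x (R x / 2)" using X(3) y by blast
      have xG: "x \<in> \<Gamma>" using x X(1) by blast
      have "cball y \<rho> \<subseteq> ball x (R x)"
      proof
        fix z assume "z \<in> cball y \<rho>"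
        then have "dist x z \<le> dist x y + dist y z" "dist y z \<le> \<rho>" "dist x y < R x / 2"
          using x by (auto intro: dist_triangle)
        then show "z \<in> ball x (R x)" using r0le[OF x(1)] rho by simp
      qed
      then have sub: "\<Gamma> \<inter> cball y \<rho> \<subseteq> Gr x \<inter> cball y \<rho>" using incl[OF xG] by blast
      have "hausdorff_measure s (\<Gamma> \<inter> cball y \<rho>) \<le> ennreal (cst x * \<rho> powr s)"
      proof (rule hm_le_family)
        fix \<delta> :: real assume d: "\<delta> > 0"
        obtain F where F: "finite F" "Gr x \<inter> cball y \<rho> \<subseteq> \<Union>F" "\<forall>S\<in>F. diameter S \<le> \<delta>"
          "(\<Sum>S\<in>F. hn * diameter S powr s) \<le> hn * (6 * (1 + LL x) * sqrt s) powr s * \<rho> powr s"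
          using graph_cover[OF dim, of "E x" "LL x" "GG x" \<rho> \<delta> hn y] ch[OF xG] rho d hn
          unfolding Gr_def s_def by auto
        show "\<exists>F. finite F \<and> \<Gamma> \<inter> cball y \<rho> \<subseteq> \<Union>F \<and> (\<forall>S\<in>F. diameter S \<le> \<delta>) \<and>
              (\<Sum>S\<in>F. hausdorff_normalization s * diameter S powr s) \<le> cst x * \<rho> powr s"
          using F sub by (intro exI[of _ F]) (auto simp: hn_def cst_def)
      qed (use hn in \<open>simp add: hn_def\<close>)
      also have "\<dots> \<le> ennreal (A1 * \<rho> powr s)"
      proof (rule ennreal_leI, rule mult_right_mono)
        show "cst x \<le> A1" unfolding A1_def by (rule member_le_sum) (use x X cst0 in auto)
      qed simp
      finally show ?thesis .
    qed
    have global: "hausdorff_measure s (\<Gamma> \<inter> cball y \<rho>) \<le> ennreal Htot" for y \<rho>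
    proof (rule hm_le_family)
      fix \<delta> :: real assume d: "\<delta> > 0"
      have exF: "\<forall>x\<in>X. \<exists>F. finite F \<and> Gr x \<inter> cball x (R x / 2) \<subseteq> \<Union>F \<and> (\<forall>S\<in>F. diameter S \<le> \<delta>) \<and>
          (\<Sum>S\<in>F. hn * diameter S powr s) \<le> cst x * (R x / 2) powr s"
      proof
        fix x assume x: "x \<in> X"
        have xG: "x \<in> \<Gamma>" using x X(1) by blast
        show "\<exists>F. finite F \<and> Gr x \<inter> cball x (R x / 2) \<subseteq> \<Union>F \<and> (\<forall>S\<in>F. diameter S \<le> \<delta>) \<and>
          (\<Sum>S\<in>F. hn * diameter S powr s) \<le> cst x * (R x / 2) powr s"
          using graph_cover[OF dim, of "E x" "LL x" "GG x" "R x / 2" \<delta> hn x] ch[OF xG] d hn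
          unfolding Gr_def s_def cst_def by auto
      qed
      from bchoice[OF exF] obtain FF where FF0: "\<forall>x\<in>X. finite (FF x) \<and> Gr x \<inter> cball x (R x / 2) \<subseteq> \<Union>(FF x) \<and>
          (\<forall>S\<in>FF x. diameter S \<le> \<delta>) \<and> (\<Sum>S\<in>FF x. hn * diameter S powr s) \<le> cst x * (R x / 2) powr s"
        by (rule exE)
      have FF: "finite (FF x) \<and> Gr x \<inter> cball x (R x / 2) \<subseteq> \<Union>(FF x) \<and>
          (\<forall>S\<in>FF x. diameter S \<le> \<delta>) \<and> (\<Sum>S\<in>FF x. hn * diameter S powr s) \<le> cst x * (R x / 2) powr s"
        if "x \<in> X" for x using FF0 that by (rule bspec)
      define F where "F = (\<Union>x\<in>X. FF x)"
      have "finite F" using FF X(2) by (simp add: F_def)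
      moreover have "\<Gamma> \<inter> cball y \<rho> \<subseteq> \<Union>F"
      proof
        fix z assume z: "z \<in> \<Gamma> \<inter> cball y \<rho>"
        then obtain x where x: "x \<in> X" "z \<in> ball x (R x / 2)" using X(3) by blast
        have xG: "x \<in> \<Gamma>" using x X(1) by blast
        have "z \<in> ball x (R x)" using x(2) ch[OF xG] by auto
        then have "z \<in> Gr x" using incl[OF xG] z by blast
        moreover have "z \<in> cball x (R x / 2)" using x(2) by simp
        ultimately have "z \<in> \<Union>(FF x)" using FF[OF x(1)] by blast
        then show "z \<in> \<Union>F" using x(1) by (auto simp: F_def)
      qed
      moreover have "\<forall>S\<in>F. diameter S \<le> \<delta>" using FF by (auto simp: F_def)
      moreover have "(\<Sum>S\<in>F. hn * diameter S powr s) \<le> Htot"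
      proof -
        have "(\<Sum>S\<in>F. hn * diameter S powr s) \<le> (\<Sum>x\<in>X. \<Sum>S\<in>FF x. hn * diameter S powr s)"
          unfolding F_def by (rule sum_UN_le_nonneg) (use X(2) FF hn in auto)
        also have "\<dots> \<le> Htot" unfolding Htot_def by (rule sum_mono) (use FF in auto)
        finally show ?thesis .
      qed
      ultimately show "\<exists>F. finite F \<and> \<Gamma> \<inter> cball y \<rho> \<subseteq> \<Union>F \<and> (\<forall>S\<in>F. diameter S \<le> \<delta>) \<and>
              (\<Sum>S\<in>F. hausdorff_normalization s * diameter S powr s) \<le> Htot"
        by (auto simp: hn_def)
    qed (use hn in \<open>simp add: hn_def\<close>)
    define A where "A = A1 + Htot / r0 powr s + 1"
    have Apos: "A > 0" using A10 Htot0 r0pos by (simp add: A_def add_nonneg_pos)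
    have "\<forall>y\<in>\<Gamma>. \<forall>\<rho>>0. hausdorff_measure s (\<Gamma> \<inter> cball y \<rho>) \<le> ennreal (A * \<rho> powr s)"
    proof (intro ballI allI impI)
      fix y \<rho> assume y: "y \<in> \<Gamma>" and rho: "(\<rho>::real) > 0"
      show "hausdorff_measure s (\<Gamma> \<inter> cball y \<rho>) \<le> ennreal (A * \<rho> powr s)"
      proof (cases "\<rho> \<le> r0")
        case True
        have "A1 * \<rho> powr s \<le> A * \<rho> powr s"
          using Htot0 r0pos by (intro mult_right_mono) (auto simp: A_def)
        then show ?thesis using local[OF y rho True] by (meson ennreal_leI order_trans)
      next
        case False
        have rr: "r0 powr s \<le> \<rho> powr s" using False r0pos s0 by (intro powr_mono2) auto
        have r0s: "r0 powr s > 0" using r0pos by simp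
        have "Htot = Htot / r0 powr s * r0 powr s" using r0s by simp
        also have "\<dots> \<le> Htot / r0 powr s * \<rho> powr s"
          using rr Htot0 r0s by (intro mult_left_mono) auto
        also have "\<dots> \<le> A * \<rho> powr s"
          using A10 by (intro mult_right_mono) (auto simp: A_def)
        finally show ?thesis using global[of y \<rho>] by (meson ennreal_leI order_trans)
      qed
    qed
    then show ?thesis using Apos unfolding \<Gamma>_def by blast
  qed
qed

lemma sm_space: "space (surface_measure \<Gamma>) = \<Gamma>"
  by (simp add: surface_measure_def space_measure_of_conv)

lemma sm_sets: "sets (surface_measure \<Gamma>) = sigma_sets \<Gamma> {A. A \<subseteq> \<Gamma> \<and> A \<in> sets borel}"
  by (simp add: surface_measure_def sets_measure_of_conv) blast

lemma sm_borel: "closed \<Gamma> \<Longrightarrow> A \<in> sets borel \<Longrightarrow> A \<inter> \<Gamma> \<in> sets (surface_measure \<Gamma>)"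
  unfolding sm_sets by (rule sigma_sets.Basic) (auto intro: sets.Int borel_closed)

lemma sm_id_meas: assumes "closed \<Gamma>" shows "(\<lambda>x. x) \<in> measurable (surface_measure \<Gamma>) borel"
proof (rule measurableI)
  fix A :: "'a set" assume "A \<in> sets borel"
  then have "A \<inter> \<Gamma> \<in> sets (surface_measure \<Gamma>)" using \<open>closed \<Gamma>\<close> by (intro sm_borel)
  then show "(\<lambda>x. x) -` A \<inter> space (surface_measure \<Gamma>) \<in> sets (surface_measure \<Gamma>)"
    by (simp add: sm_space)
qed simp

lemma sm_le_H: "emeasure (surface_measure (\<Gamma>::'a::euclidean_space set)) A \<le> hausdorff_measure (real DIM('a) - 1) A"
  by (simp add: surface_measure_def emeasure_measure_of_conv)

lemma powr_algebra:
  fixes \<delta> A s \<sigma> :: real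
  assumes "\<delta> > 0"
  shows "(2 ^ k * \<delta>) powr (-(s + 2 * \<sigma>)) * (A * (2 * (2 ^ k * \<delta>)) powr s)
       = A * 2 powr s * \<delta> powr (-2 * \<sigma>) * (2 powr (-2 * \<sigma>)) ^ k"
proof -
  define a where "a = 2 ^ k * \<delta>"
  have a0: "a > 0" using assms by (simp add: a_def)
  have "(2 * a) powr s = 2 powr s * a powr s" using a0 by (simp add: powr_mult)
  moreover have "a powr (-(s + 2 * \<sigma>)) = a powr (-s) * a powr (-2 * \<sigma>)"
    using a0 by (simp add: powr_add[symmetric])
  moreover have "a powr (-s) * a powr s = 1" using a0 by (simp add: powr_add[symmetric])
  moreover have "a powr (-2 * \<sigma>) = (2 powr (-2 * \<sigma>)) ^ k * \<delta> powr (-2 * \<sigma>)"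
  proof -
    have "a powr (-2 * \<sigma>) = (2 ^ k) powr (-2 * \<sigma>) * \<delta> powr (-2 * \<sigma>)"
      using assms by (simp add: a_def powr_mult)
    also have "(2::real) ^ k = 2 powr (real k)" by (simp add: powr_realpow)
    also have "(2 powr (real k)) powr (-2 * \<sigma>) = (2 powr (-2 * \<sigma>)) powr (real k)"
      by (simp add: powr_powr mult.commute)
    also have "\<dots> = (2 powr (-2 * \<sigma>)) ^ k" by (simp add: powr_realpow)
    finally show ?thesis .
  qed
  ultimately show ?thesis unfolding a_def[symmetric]
    by (simp add: algebra_simps)
qed

lemma dyadic_k:
  fixes d \<delta> :: real
  assumes "\<delta> > 0" "\<delta> \<le> d"
  shows "\<exists>k::nat. 2 ^ k * \<delta> \<le> d \<and> d \<le> 2 * (2 ^ k * \<delta>)"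
proof -
  define r where "r = d / \<delta>"
  have r1: "r \<ge> 1" using assms by (simp add: r_def)
  define k where "k = nat \<lfloor>log 2 r\<rfloor>"
  have l0: "log 2 r \<ge> 0" using r1 by simp
  have kk: "real k = of_int \<lfloor>log 2 r\<rfloor>" using l0 by (simp add: k_def)
  have "2 ^ k = 2 powr (real k)" by (simp add: powr_realpow)
  also have "\<dots> \<le> 2 powr (log 2 r)" unfolding kk by (rule powr_mono) auto
  also have "\<dots> = r" using r1 by simp
  finally have lo: "2 ^ k \<le> r" .
  have "r = 2 powr (log 2 r)" using r1 by simp
  also have "\<dots> \<le> 2 powr (real k + 1)" unfolding kk by (rule powr_mono) (linarith, simp)
  also have "\<dots> = 2 * 2 ^ k" by (simp add: powr_add powr_realpow)
  finally have hi: "r \<le> 2 * 2 ^ k" .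
  show ?thesis
    using lo hi assms by (intro exI[of _ k]) (simp add: r_def field_simps)
qed

lemma inner_bound:
  fixes \<Omega> :: "'a::euclidean_space set"
  assumes dim: "DIM('a) \<ge> 2" and bl: "bounded_lipschitz_domain \<Omega>" and sig: "0 < \<sigma>"
  shows "\<exists>K\<ge>0. \<forall>x\<in>frontier \<Omega>. \<forall>\<delta>>0.
    (\<integral>\<^sup>+y. indicator {y. \<delta> \<le> dist x y} y * ennreal (1 / dist x y powr (real DIM('a) - 1 + 2 * \<sigma>))
       \<partial>surface_measure (frontier \<Omega>)) \<le> ennreal (K * \<delta> powr (-2 * \<sigma>))"
proof -
  define s where "s = real DIM('a) - 1"
  define \<Gamma> where "\<Gamma> = frontier \<Omega>"
  define M where "M = surface_measure \<Gamma>"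
  have s1: "s \<ge> 1" using dim by (simp add: s_def)
  obtain A where A: "A > 0" "\<forall>y\<in>\<Gamma>. \<forall>\<rho>>0. hausdorff_measure s (\<Gamma> \<inter> cball y \<rho>) \<le> ennreal (A * \<rho> powr s)"
    using regularity[OF dim bl] unfolding s_def \<Gamma>_def by blast
  have clG: "closed \<Gamma>" by (simp add: \<Gamma>_def)
  have reg: "emeasure M (\<Gamma> \<inter> cball x \<rho>) \<le> ennreal (A * \<rho> powr s)" if "x \<in> \<Gamma>" "\<rho> > 0" for x \<rho>
    using sm_le_H[of \<Gamma> "\<Gamma> \<inter> cball x \<rho>"] A(2) that unfolding M_def s_def by (meson order_trans)
  have measG: "\<Gamma> \<inter> cball x \<rho> \<in> sets M" for x \<rho>
    unfolding M_def using sm_borel[OF clG, of "cball x \<rho>"] by (simp add: Int_commute)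
  define q :: real where "q = 2 powr (-2 * \<sigma>)"
  have q0: "q > 0" by (simp add: q_def)
  have "q < 2 powr 0" unfolding q_def by (rule powr_less_mono) (use sig in auto)
  then have q1: "q < 1" by simp
  define K where "K = A * 2 powr s / (1 - q)"
  have K0: "K \<ge> 0" using A q1 by (simp add: K_def)
  have "\<forall>x\<in>\<Gamma>. \<forall>\<delta>>0. (\<integral>\<^sup>+y. indicator {y. \<delta> \<le> dist x y} y * ennreal (1 / dist x y powr (s + 2 * \<sigma>)) \<partial>M)
           \<le> ennreal (K * \<delta> powr (-2 * \<sigma>))"
  proof (intro ballI allI impI)
    fix x \<delta> assume x: "x \<in> \<Gamma>" and d: "(\<delta>::real) > 0"
    define a where "a k = 2 ^ k * \<delta>" for k :: nat
    have a0: "a k > 0" for k using d by (simp add: a_def)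
    define F where "F k y = ennreal (a k powr (-(s + 2 * \<sigma>))) * indicator (\<Gamma> \<inter> cball x (2 * a k)) y" for k y
    have pw: "indicator {y. \<delta> \<le> dist x y} y * ennreal (1 / dist x y powr (s + 2 * \<sigma>)) \<le> (\<Sum>k. F k y)"
      if y: "y \<in> space M" for y
    proof (cases "\<delta> \<le> dist x y")
      case False then show ?thesis by simp
    next
      case True
      obtain k where k: "a k \<le> dist x y" "dist x y \<le> 2 * a k" using dyadic_k[OF d True] unfolding a_def by blast
      have yG: "y \<in> \<Gamma>" using y by (simp add: M_def sm_space)
      have "1 / dist x y powr (s + 2 * \<sigma>) \<le> a k powr (-(s + 2 * \<sigma>))"
      proof -
        have "a k powr (s + 2 * \<sigma>) \<le> dist x y powr (s + 2 * \<sigma>)"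
          using k a0 s1 sig by (intro powr_mono2) auto
        then have "1 / dist x y powr (s + 2 * \<sigma>) \<le> 1 / a k powr (s + 2 * \<sigma>)"
        proof (rule divide_left_mono)
          have "dist x y > 0" using a0[of k] k(1) by linarith
          then show "0 < dist x y powr (s + 2 * \<sigma>) * a k powr (s + 2 * \<sigma>)"
            using a0[of k] by (intro mult_pos_pos) auto
        qed simp
        moreover have "a k powr (-(s + 2 * \<sigma>)) = 1 / a k powr (s + 2 * \<sigma>)"
          by (rule powr_minus_divide)
        ultimately show ?thesis by simp
      qed
      then have "indicator {y. \<delta> \<le> dist x y} y * ennreal (1 / dist x y powr (s + 2 * \<sigma>)) \<le> F k y"
        using True yG k by (simp add: F_def ennreal_leI dist_commute)
      also have "F k y \<le> (\<Sum>k. F k y)"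
        using sum_le_suminf[OF summableI, of "{k}" "\<lambda>k. F k y"] by simp
      finally show ?thesis .
    qed
    have "(\<integral>\<^sup>+y. indicator {y. \<delta> \<le> dist x y} y * ennreal (1 / dist x y powr (s + 2 * \<sigma>)) \<partial>M)
          \<le> (\<integral>\<^sup>+y. (\<Sum>k. F k y) \<partial>M)"
      by (rule nn_integral_mono) (rule pw)
    also have "\<dots> = (\<Sum>k. \<integral>\<^sup>+y. F k y \<partial>M)"
      by (rule nn_integral_suminf) (use measG in \<open>simp add: F_def\<close>)
    also have "\<dots> = (\<Sum>k. ennreal (a k powr (-(s + 2 * \<sigma>))) * emeasure M (\<Gamma> \<inter> cball x (2 * a k)))"
      unfolding F_def by (subst nn_integral_cmult_indicator[OF measG]) simp
    also have "\<dots> \<le> (\<Sum>k. ennreal (A * 2 powr s * \<delta> powr (-2 * \<sigma>) * q ^ k))"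
    proof (rule suminf_le)
      fix k
      have "ennreal (a k powr (-(s + 2 * \<sigma>))) * emeasure M (\<Gamma> \<inter> cball x (2 * a k))
            \<le> ennreal (a k powr (-(s + 2 * \<sigma>))) * ennreal (A * (2 * a k) powr s)"
        by (rule mult_left_mono) (use reg[OF x, of "2 * a k"] a0 in auto)
      also have "\<dots> = ennreal (a k powr (-(s + 2 * \<sigma>)) * (A * (2 * a k) powr s))"
        using A by (simp add: ennreal_mult)
      also have "\<dots> = ennreal (A * 2 powr s * \<delta> powr (-2 * \<sigma>) * q ^ k)"
        unfolding a_def q_def using powr_algebra[OF d, of k s \<sigma> A] by (simp only:)
      finally show "ennreal (a k powr (-(s + 2 * \<sigma>))) * emeasure M (\<Gamma> \<inter> cball x (2 * a k))
            \<le> ennreal (A * 2 powr s * \<delta> powr (-2 * \<sigma>) * q ^ k)" .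
    qed auto
    also have "\<dots> = ennreal (\<Sum>k. A * 2 powr s * \<delta> powr (-2 * \<sigma>) * q ^ k)"
      using q0 q1 A by (intro suminf_ennreal2 summable_mult summable_geometric) auto
    also have "(\<Sum>k. A * 2 powr s * \<delta> powr (-2 * \<sigma>) * q ^ k) = A * 2 powr s * \<delta> powr (-2 * \<sigma>) * (1 / (1 - q))"
      using q0 q1 by (subst suminf_mult) (auto simp: suminf_geometric summable_geometric)
    also have "\<dots> = K * \<delta> powr (-2 * \<sigma>)" by (simp add: K_def)
    finally show "(\<integral>\<^sup>+y. indicator {y. \<delta> \<le> dist x y} y * ennreal (1 / dist x y powr (s + 2 * \<sigma>)) \<partial>M)
           \<le> ennreal (K * \<delta> powr (-2 * \<sigma>))" .
  qed
  then show ?thesis using K0 unfolding M_def \<Gamma>_def s_def by blast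
qed

lemma pointwise_split:
  fixes \<Gamma> :: "'a::euclidean_space set" and u :: "'a \<Rightarrow> real" and t :: real
  assumes fin: "finite \<T>" and cov: "\<Union>\<T> = \<Gamma>"
    and dpos: "\<forall>T\<in>\<T>. diameter T > 0" and Cc: "Ccent > 0" and m4: "M4 \<Gamma> Ccent \<T>"
    and x: "x \<in> \<Gamma>" and y: "y \<in> \<Gamma>"
  defines "f \<equiv> \<lambda>a b. ennreal ((u a - u b)\<^sup>2 / dist a b powr t)"
  defines "h \<equiv> \<lambda>T a b. indicator T a * ennreal (2 * (u a)\<^sup>2) *
              (indicator {y. diameter T / Ccent \<le> dist a y} b * ennreal (1 / dist a b powr t))"
  shows "f x y \<le> (\<Sum>T\<in>\<T>. \<Sum>T'\<in>patch_elems \<T> T. indicator ((T \<union> T') \<times> (T \<union> T')) (x, y) * f x y)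
                + (\<Sum>T\<in>\<T>. h T x y + h T y x)"
    (is "_ \<le> ?N + ?F")
proof -
  obtain T1 where T1: "T1 \<in> \<T>" "x \<in> T1" using x cov by blast
  obtain T2 where T2: "T2 \<in> \<T>" "y \<in> T2" using y cov by blast
  have finpe: "finite (patch_elems \<T> T)" for T using fin by (simp add: patch_elems_def)
  have near: "f x y \<le> ?N" if "T \<in> \<T>" "T' \<in> patch_elems \<T> T" "(x, y) \<in> (T \<union> T') \<times> (T \<union> T')" for T T'
  proof -
    have "f x y = indicator ((T \<union> T') \<times> (T \<union> T')) (x, y) * f x y" using that(3) by simp
    also have "\<dots> \<le> (\<Sum>T'\<in>patch_elems \<T> T. indicator ((T \<union> T') \<times> (T \<union> T')) (x, y) * f x y)"
      by (rule member_le_sum) (use that finpe in auto)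
    also have "\<dots> \<le> ?N"
      by (rule member_le_sum[where f = "\<lambda>T. \<Sum>T'\<in>patch_elems \<T> T. indicator ((T \<union> T') \<times> (T \<union> T')) (x, y) * f x y"])
         (use that fin in auto)
    finally show ?thesis .
  qed
  show ?thesis
  proof (cases "\<exists>T'\<in>patch_elems \<T> T1. y \<in> T'")
    case True
    then obtain T' where "T' \<in> patch_elems \<T> T1" "y \<in> T'" by blast
    then have "f x y \<le> ?N" using near[OF T1(1)] T1(2) by blast
    then show ?thesis by (rule add_increasing2[rotated]) simp
  next
    case notA: False
    show ?thesis
    proof (cases "\<exists>T'\<in>patch_elems \<T> T2. x \<in> T'")
      case True
      then obtain T' where "T' \<in> patch_elems \<T> T2" "x \<in> T'" by blast
      then have "f x y \<le> ?N" using near[OF T2(1)] T2(2) by blast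
      then show ?thesis by (rule add_increasing2[rotated]) simp
    next
      case notB: False
      have far: "diameter T / Ccent \<le> dist a b"
        if "T \<in> \<T>" "a \<in> T" "b \<in> \<Gamma>" "\<not> (\<exists>T'\<in>patch_elems \<T> T. b \<in> T')" for T a b
      proof -
        have b: "b \<in> \<Gamma> - patch \<T> T" using that(3,4) by (auto simp: patch_def)
        then have ne: "\<Gamma> - patch \<T> T \<noteq> {}" by blast
        have "diameter T \<le> Ccent * dist_set \<Gamma> T (\<Gamma> - patch \<T> T)" using m4 that(1) by (simp add: M4_def)
        also have "dist_set \<Gamma> T (\<Gamma> - patch \<T> T) = setdist T (\<Gamma> - patch \<T> T)" using ne by (simp add: dist_set_def)
        also have "setdist T (\<Gamma> - patch \<T> T) \<le> dist a b" by (rule setdist_le_dist[OF that(2) b])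
        finally have "diameter T \<le> Ccent * dist a b" using Cc by (simp add: mult_left_mono)
        then show ?thesis using Cc by (simp add: field_simps)
      qed
      have f1: "diameter T1 / Ccent \<le> dist x y" by (rule far[OF T1 y notA])
      have f2: "diameter T2 / Ccent \<le> dist y x" by (rule far[OF T2 x notB])
      have dp: "dist x y > 0" using f1 dpos T1(1) Cc by (smt (verit) divide_pos_pos)
      define d where "d = dist x y powr t"
      have d0: "d > 0" using dp by (simp add: d_def)
      have "(u x - u y)\<^sup>2 \<le> 2 * (u x)\<^sup>2 + 2 * (u y)\<^sup>2"
        using zero_le_power2[of "u x + u y"] by (simp add: power2_eq_square algebra_simps)
      then have "(u x - u y)\<^sup>2 / d \<le> (2 * (u x)\<^sup>2 + 2 * (u y)\<^sup>2) / d"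
        using d0 by (simp add: divide_right_mono)
      then have "(u x - u y)\<^sup>2 / d \<le> 2 * (u x)\<^sup>2 * (1 / d) + 2 * (u y)\<^sup>2 * (1 / d)"
        by (simp add: add_divide_distrib)
      then have "ennreal ((u x - u y)\<^sup>2 / d) \<le> ennreal (2 * (u x)\<^sup>2 * (1 / d) + 2 * (u y)\<^sup>2 * (1 / d))"
        by (rule ennreal_leI)
      then have "f x y \<le> ennreal (2 * (u x)\<^sup>2 * (1 / d) + 2 * (u y)\<^sup>2 * (1 / d))"
        by (simp only: f_def d_def)
      also have "\<dots> = ennreal (2 * (u x)\<^sup>2 * (1 / d)) + ennreal (2 * (u y)\<^sup>2 * (1 / d))"
        using d0 by (intro ennreal_plus) auto
      also have "ennreal (2 * (u x)\<^sup>2 * (1 / d)) = h T1 x y"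
      proof -
        have "h T1 x y = ennreal (2 * (u x)\<^sup>2) * ennreal (1 / d)" using T1 f1 by (simp add: h_def d_def)
        also have "\<dots> = ennreal (2 * (u x)\<^sup>2 * (1 / d))" by (rule ennreal_mult[symmetric]) (use d0 in auto)
        finally show ?thesis by simp
      qed
      also have "ennreal (2 * (u y)\<^sup>2 * (1 / d)) = h T2 y x"
      proof -
        have "h T2 y x = ennreal (2 * (u y)\<^sup>2) * ennreal (1 / d)" using T2 f2 by (simp add: h_def d_def dist_commute)
        also have "\<dots> = ennreal (2 * (u y)\<^sup>2 * (1 / d))" by (rule ennreal_mult[symmetric]) (use d0 in auto)
        finally show ?thesis by simp
      qed
      also have "h T1 x y + h T2 y x \<le> (\<Sum>T\<in>\<T>. h T x y) + (\<Sum>T\<in>\<T>. h T y x)"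
        by (intro add_mono member_le_sum) (use T1 T2 fin in auto)
      also have "\<dots> = ?F" by (simp add: sum.distrib)
      finally have "f x y \<le> ?F" .
      then show ?thesis by (rule add_increasing[rotated]) simp
    qed
  qed
qed

lemma per_j:
  fixes \<Gamma> :: "'a::euclidean_space set" and u :: "'a \<Rightarrow> real" and \<sigma> Ccent K t :: real
  assumes clG: "closed \<Gamma>" and bG: "bounded \<Gamma>" and fin: "finite \<T>" and cov: "\<Union>\<T> = \<Gamma>"
    and Tc: "\<forall>T\<in>\<T>. closed T"
    and dpos: "\<forall>T\<in>\<T>. diameter T > 0" and Cc: "Ccent > 0" and m4: "M4 \<Gamma> Ccent \<T>"
    and K0: "K \<ge> 0" and sig: "\<sigma> > 0"
    and Kb: "\<forall>x\<in>\<Gamma>. \<forall>\<delta>>0. (\<integral>\<^sup>+y. indicator {y. \<delta> \<le> dist x y} y * ennreal (1 / dist x y powr t)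
               \<partial>surface_measure \<Gamma>) \<le> ennreal (K * \<delta> powr (-2 * \<sigma>))"
    and fm: "finite_measure (surface_measure \<Gamma>)"
    and um: "u \<in> borel_measurable (surface_measure \<Gamma>)"
  shows "(\<integral>\<^sup>+p. indicator (\<Gamma> \<times> \<Gamma>) p * ennreal ((u (fst p) - u (snd p))\<^sup>2 / dist (fst p) (snd p) powr t)
             \<partial>(surface_measure \<Gamma> \<Otimes>\<^sub>M surface_measure \<Gamma>))
        + (\<integral>\<^sup>+x. indicator \<Gamma> x * ennreal ((u x)\<^sup>2) \<partial>surface_measure \<Gamma>)
   \<le> (\<Sum>T\<in>\<T>. \<Sum>T'\<in>patch_elems \<T> T. \<integral>\<^sup>+p. indicator ((T \<union> T') \<times> (T \<union> T')) p *
            ennreal ((u (fst p) - u (snd p))\<^sup>2 / dist (fst p) (snd p) powr t) \<partial>(surface_measure \<Gamma> \<Otimes>\<^sub>M surface_measure \<Gamma>))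
     + (\<Sum>T\<in>\<T>. ennreal ((4 * K * Ccent powr (2 * \<sigma>) + diameter \<Gamma> powr (2 * \<sigma>)) * diameter T powr (-2 * \<sigma>))
            * (\<integral>\<^sup>+x. indicator T x * ennreal ((u x)\<^sup>2) \<partial>surface_measure \<Gamma>))"
proof -
  define M where "M = surface_measure \<Gamma>"
  define fp where "fp p = ennreal ((u (fst p) - u (snd p))\<^sup>2 / dist (fst p) (snd p) powr t)" for p
  define h where "h T a b = indicator T a * ennreal (2 * (u a)\<^sup>2) *
              (indicator {y. diameter T / Ccent \<le> dist a y} b * ennreal (1 / dist a b powr t))" for T a b
  define L2 where "L2 T = (\<integral>\<^sup>+x. indicator T x * ennreal ((u x)\<^sup>2) \<partial>M)" for T
  have sf: "sigma_finite_measure M" using fm unfolding M_def finite_measure_def by blast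
  have psf: "pair_sigma_finite M M" by (simp add: pair_sigma_finite_def sf)
  have spM: "space M = \<Gamma>" by (simp add: M_def sm_space)
  have spMM: "space (M \<Otimes>\<^sub>M M) = \<Gamma> \<times> \<Gamma>" by (simp add: space_pair_measure spM)
  have idm: "(\<lambda>x. x) \<in> measurable M borel" unfolding M_def by (rule sm_id_meas[OF clG])
  have um': "u \<in> borel_measurable M" using um by (simp add: M_def)
  note [measurable] = um'
  have [measurable]: "(\<lambda>p. fst p) \<in> borel_measurable (M \<Otimes>\<^sub>M M)"
    by (rule measurable_compose[OF measurable_fst idm])
  have [measurable]: "(\<lambda>p. snd p) \<in> borel_measurable (M \<Otimes>\<^sub>M M)"
    by (rule measurable_compose[OF measurable_snd idm])
  have [measurable]: "(\<lambda>p. u (fst p)) \<in> borel_measurable (M \<Otimes>\<^sub>M M)"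
    by (rule measurable_compose[OF measurable_fst um'])
  have [measurable]: "(\<lambda>p. u (snd p)) \<in> borel_measurable (M \<Otimes>\<^sub>M M)"
    by (rule measurable_compose[OF measurable_snd um'])
  have [measurable]: "(\<lambda>x. x) \<in> borel_measurable M" by (rule idm)
  have Tsets: "T \<in> sets M" if "T \<in> \<T>" for T
  proof -
    have "T \<inter> \<Gamma> \<in> sets M" unfolding M_def by (rule sm_borel[OF clG]) (use Tc that in auto)
    moreover have "T \<inter> \<Gamma> = T" using cov that by blast
    ultimately show ?thesis by simp
  qed
  have fpm: "fp \<in> borel_measurable (M \<Otimes>\<^sub>M M)" unfolding fp_def by measurable
  have hm1: "(\<lambda>p. h T (fst p) (snd p)) \<in> borel_measurable (M \<Otimes>\<^sub>M M)" if "T \<in> \<T>" for T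
    using Tsets[OF that] unfolding h_def by measurable
  have hm2: "(\<lambda>p. h T (snd p) (fst p)) \<in> borel_measurable (M \<Otimes>\<^sub>M M)" if "T \<in> \<T>" for T
    using Tsets[OF that] unfolding h_def by measurable
  have nm: "(\<lambda>p. indicator ((T \<union> T') \<times> (T \<union> T')) p * fp p) \<in> borel_measurable (M \<Otimes>\<^sub>M M)"
    if "T \<in> \<T>" "T' \<in> \<T>" for T T'
  proof -
    have "(T \<union> T') \<times> (T \<union> T') \<in> sets (M \<Otimes>\<^sub>M M)"
      using Tsets[OF that(1)] Tsets[OF that(2)] by (intro pair_measureI) auto
    then show ?thesis using fpm by measurable
  qed
  have pe_sub: "patch_elems \<T> T \<subseteq> \<T>" for T by (auto simp: patch_elems_def)
  have finpe: "finite (patch_elems \<T> T)" for T using fin pe_sub by (rule finite_subset[rotated])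
  have IT: "(\<integral>\<^sup>+x. \<integral>\<^sup>+y. h T x y \<partial>M \<partial>M) \<le> ennreal (2 * (K * (diameter T / Ccent) powr (-2 * \<sigma>))) * L2 T"
    if T: "T \<in> \<T>" for T
  proof -
    define \<delta> where "\<delta> = diameter T / Ccent"
    define c where "c = K * \<delta> powr (-2 * \<sigma>)"
    have c0: "c \<ge> 0" using K0 by (simp add: c_def)
    have dl: "\<delta> > 0" using dpos T Cc by (simp add: \<delta>_def)
    have TM[measurable]: "T \<in> sets M" by (rule Tsets[OF T])
    have inner: "(\<integral>\<^sup>+y. h T x y \<partial>M) \<le> indicator T x * ennreal (2 * (u x)\<^sup>2) * ennreal c"
      if x: "x \<in> space M" for x
    proof -
      have "(\<integral>\<^sup>+y. h T x y \<partial>M) = indicator T x * ennreal (2 * (u x)\<^sup>2) *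
             (\<integral>\<^sup>+y. indicator {y. \<delta> \<le> dist x y} y * ennreal (1 / dist x y powr t) \<partial>M)"
        unfolding h_def \<delta>_def by (rule nn_integral_cmult) measurable
      also have "\<dots> \<le> indicator T x * ennreal (2 * (u x)\<^sup>2) * ennreal c"
      proof (cases "x \<in> T")
        case True
        then have "x \<in> \<Gamma>" using T cov by blast
        then have "(\<integral>\<^sup>+y. indicator {y. \<delta> \<le> dist x y} y * ennreal (1 / dist x y powr t) \<partial>M) \<le> ennreal c"
          using Kb dl unfolding M_def c_def by blast
        then show ?thesis by (rule mult_left_mono) simp
      qed simp
      finally show ?thesis .
    qed
    have "(\<integral>\<^sup>+x. \<integral>\<^sup>+y. h T x y \<partial>M \<partial>M) \<le> (\<integral>\<^sup>+x. indicator T x * ennreal (2 * (u x)\<^sup>2) * ennreal c \<partial>M)"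
      by (rule nn_integral_mono) (rule inner)
    also have "\<dots> = (\<integral>\<^sup>+x. ennreal (2 * c) * (indicator T x * ennreal ((u x)\<^sup>2)) \<partial>M)"
    proof (rule nn_integral_cong)
      fix x
      have "ennreal (2 * (u x)\<^sup>2) * ennreal c = ennreal (2 * (u x)\<^sup>2 * c)"
        using c0 by (simp add: ennreal_mult)
      also have "\<dots> = ennreal (2 * c) * ennreal ((u x)\<^sup>2)"
        using c0 by (simp add: ennreal_mult[symmetric] mult_ac)
      finally have eq: "ennreal (2 * (u x)\<^sup>2) * ennreal c = ennreal (2 * c) * ennreal ((u x)\<^sup>2)" .
      have "indicator T x * ennreal (2 * (u x)\<^sup>2) * ennreal c = indicator T x * (ennreal (2 * (u x)\<^sup>2) * ennreal c)"
        by (simp only: mult.assoc)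
      also have "\<dots> = indicator T x * (ennreal (2 * c) * ennreal ((u x)\<^sup>2))" by (simp only: eq)
      also have "\<dots> = ennreal (2 * c) * (indicator T x * ennreal ((u x)\<^sup>2))" by (simp only: mult.left_commute)
      finally show "indicator T x * ennreal (2 * (u x)\<^sup>2) * ennreal c = ennreal (2 * c) * (indicator T x * ennreal ((u x)\<^sup>2))" .
    qed
    also have "\<dots> = ennreal (2 * c) * L2 T"
      unfolding L2_def by (rule nn_integral_cmult) measurable
    finally show ?thesis by (simp add: c_def \<delta>_def)
  qed
  have Tsub: "T \<subseteq> \<Gamma>" if "T \<in> \<T>" for T using cov that by blast
  define N where "N p = (\<Sum>T\<in>\<T>. \<Sum>T'\<in>patch_elems \<T> T. indicator ((T \<union> T') \<times> (T \<union> T')) p * fp p)" for p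
  define Fr where "Fr p = (\<Sum>T\<in>\<T>. h T (fst p) (snd p) + h T (snd p) (fst p))" for p
  have Nm: "N \<in> borel_measurable (M \<Otimes>\<^sub>M M)" unfolding N_def
    by (intro borel_measurable_sum) (use nm pe_sub in blast)
  have Frm: "Fr \<in> borel_measurable (M \<Otimes>\<^sub>M M)" unfolding Fr_def
    by (intro borel_measurable_sum borel_measurable_add) (use hm1 hm2 in auto)
  have S1: "(\<integral>\<^sup>+p. indicator (\<Gamma> \<times> \<Gamma>) p * fp p \<partial>(M \<Otimes>\<^sub>M M)) \<le> (\<integral>\<^sup>+p. N p + Fr p \<partial>(M \<Otimes>\<^sub>M M))"
  proof (rule nn_integral_mono)
    fix p assume "p \<in> space (M \<Otimes>\<^sub>M M)"
    then obtain x y where p: "p = (x, y)" "x \<in> \<Gamma>" "y \<in> \<Gamma>" using spMM by (cases p) auto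
    show "indicator (\<Gamma> \<times> \<Gamma>) p * fp p \<le> N p + Fr p"
      using pointwise_split[OF fin cov dpos Cc m4 p(2) p(3), of u t] p
      by (simp add: N_def Fr_def fp_def h_def)
  qed
  also have "\<dots> = (\<integral>\<^sup>+p. N p \<partial>(M \<Otimes>\<^sub>M M)) + (\<integral>\<^sup>+p. Fr p \<partial>(M \<Otimes>\<^sub>M M))"
    by (rule nn_integral_add[OF Nm Frm])
  also have "(\<integral>\<^sup>+p. N p \<partial>(M \<Otimes>\<^sub>M M)) = (\<Sum>T\<in>\<T>. \<Sum>T'\<in>patch_elems \<T> T.
        \<integral>\<^sup>+p. indicator ((T \<union> T') \<times> (T \<union> T')) p * fp p \<partial>(M \<Otimes>\<^sub>M M))"
  proof -
    have "(\<integral>\<^sup>+p. N p \<partial>(M \<Otimes>\<^sub>M M)) = (\<Sum>T\<in>\<T>. \<integral>\<^sup>+p. (\<Sum>T'\<in>patch_elems \<T> T. indicator ((T \<union> T') \<times> (T \<union> T')) p * fp p) \<partial>(M \<Otimes>\<^sub>M M))"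
      unfolding N_def by (rule nn_integral_sum) (intro borel_measurable_sum, use nm pe_sub in blast)
    also have "\<dots> = (\<Sum>T\<in>\<T>. \<Sum>T'\<in>patch_elems \<T> T. \<integral>\<^sup>+p. indicator ((T \<union> T') \<times> (T \<union> T')) p * fp p \<partial>(M \<Otimes>\<^sub>M M))"
      by (intro sum.cong refl nn_integral_sum) (use nm pe_sub in blast)
    finally show ?thesis .
  qed
  also have "(\<integral>\<^sup>+p. Fr p \<partial>(M \<Otimes>\<^sub>M M)) \<le> (\<Sum>T\<in>\<T>. ennreal (2 * (K * (diameter T / Ccent) powr (-2 * \<sigma>))) * L2 T
       + ennreal (2 * (K * (diameter T / Ccent) powr (-2 * \<sigma>))) * L2 T)"
  proof -
    have "(\<integral>\<^sup>+p. Fr p \<partial>(M \<Otimes>\<^sub>M M)) = (\<Sum>T\<in>\<T>. \<integral>\<^sup>+p. h T (fst p) (snd p) + h T (snd p) (fst p) \<partial>(M \<Otimes>\<^sub>M M))"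
      unfolding Fr_def by (rule nn_integral_sum) (intro borel_measurable_add, use hm1 hm2 in auto)
    also have "\<dots> = (\<Sum>T\<in>\<T>. (\<integral>\<^sup>+p. h T (fst p) (snd p) \<partial>(M \<Otimes>\<^sub>M M)) + (\<integral>\<^sup>+p. h T (snd p) (fst p) \<partial>(M \<Otimes>\<^sub>M M)))"
      by (intro sum.cong refl nn_integral_add) (use hm1 hm2 in auto)
    also have "\<dots> \<le> (\<Sum>T\<in>\<T>. ennreal (2 * (K * (diameter T / Ccent) powr (-2 * \<sigma>))) * L2 T
       + ennreal (2 * (K * (diameter T / Ccent) powr (-2 * \<sigma>))) * L2 T)"
    proof (rule sum_mono)
      fix T assume T: "T \<in> \<T>"
      have e1: "(\<integral>\<^sup>+p. h T (fst p) (snd p) \<partial>(M \<Otimes>\<^sub>M M)) = (\<integral>\<^sup>+x. \<integral>\<^sup>+y. h T x y \<partial>M \<partial>M)"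
        using sigma_finite_measure.nn_integral_fst[OF sf hm1[OF T]] by simp
      have e2: "(\<integral>\<^sup>+p. h T (snd p) (fst p) \<partial>(M \<Otimes>\<^sub>M M)) = (\<integral>\<^sup>+x. \<integral>\<^sup>+y. h T x y \<partial>M \<partial>M)"
        using pair_sigma_finite.nn_integral_snd[OF psf hm2[OF T]] by simp
      show "(\<integral>\<^sup>+p. h T (fst p) (snd p) \<partial>(M \<Otimes>\<^sub>M M)) + (\<integral>\<^sup>+p. h T (snd p) (fst p) \<partial>(M \<Otimes>\<^sub>M M))
          \<le> ennreal (2 * (K * (diameter T / Ccent) powr (-2 * \<sigma>))) * L2 T
            + ennreal (2 * (K * (diameter T / Ccent) powr (-2 * \<sigma>))) * L2 T"
        unfolding e1 e2 by (intro add_mono IT[OF T])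
    qed
    finally show ?thesis .
  qed
  finally have Semi: "(\<integral>\<^sup>+p. indicator (\<Gamma> \<times> \<Gamma>) p * fp p \<partial>(M \<Otimes>\<^sub>M M)) \<le>
      (\<Sum>T\<in>\<T>. \<Sum>T'\<in>patch_elems \<T> T. \<integral>\<^sup>+p. indicator ((T \<union> T') \<times> (T \<union> T')) p * fp p \<partial>(M \<Otimes>\<^sub>M M))
      + (\<Sum>T\<in>\<T>. ennreal (2 * (K * (diameter T / Ccent) powr (-2 * \<sigma>))) * L2 T
       + ennreal (2 * (K * (diameter T / Ccent) powr (-2 * \<sigma>))) * L2 T)"
    by (simp add: add_mono)
  define fac where "fac T = diameter \<Gamma> powr (2 * \<sigma>) * diameter T powr (-2 * \<sigma>)" for T :: "'a set"
  have fac1: "fac T \<ge> 1" if T: "T \<in> \<T>" for T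
  proof -
    have dT: "diameter T > 0" using dpos T by blast
    have "diameter T \<le> diameter \<Gamma>" by (rule diameter_subset[OF Tsub[OF T] bG])
    then have "diameter T powr (2 * \<sigma>) \<le> diameter \<Gamma> powr (2 * \<sigma>)" using dT sig by (intro powr_mono2) auto
    moreover have "diameter T powr (-2 * \<sigma>) = 1 / diameter T powr (2 * \<sigma>)"
      using powr_minus_divide[of "diameter T" "2 * \<sigma>"] by simp
    ultimately have "1 = diameter T powr (2 * \<sigma>) * diameter T powr (-2 * \<sigma>)"
      using dT by simp
    also have "\<dots> \<le> diameter \<Gamma> powr (2 * \<sigma>) * diameter T powr (-2 * \<sigma>)"
      using \<open>diameter T powr (2 * \<sigma>) \<le> diameter \<Gamma> powr (2 * \<sigma>)\<close> by (rule mult_right_mono) simp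
    finally show ?thesis by (simp add: fac_def)
  qed
  have L2part: "(\<integral>\<^sup>+x. indicator \<Gamma> x * ennreal ((u x)\<^sup>2) \<partial>M) \<le> (\<Sum>T\<in>\<T>. ennreal (fac T) * L2 T)"
  proof -
    have "(\<integral>\<^sup>+x. indicator \<Gamma> x * ennreal ((u x)\<^sup>2) \<partial>M) \<le> (\<integral>\<^sup>+x. (\<Sum>T\<in>\<T>. indicator T x * ennreal ((u x)\<^sup>2)) \<partial>M)"
    proof (rule nn_integral_mono)
      fix x assume "x \<in> space M"
      then obtain T0 where T0: "T0 \<in> \<T>" "x \<in> T0" using spM cov by blast
      have "indicator \<Gamma> x * ennreal ((u x)\<^sup>2) = indicator T0 x * ennreal ((u x)\<^sup>2)" using T0 Tsub[OF T0(1)] by (simp add: subsetD)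
      also have "\<dots> \<le> (\<Sum>T\<in>\<T>. indicator T x * ennreal ((u x)\<^sup>2))"
        by (rule member_le_sum) (use T0 fin in auto)
      finally show "indicator \<Gamma> x * ennreal ((u x)\<^sup>2) \<le> (\<Sum>T\<in>\<T>. indicator T x * ennreal ((u x)\<^sup>2))" .
    qed
    also have "\<dots> = (\<Sum>T\<in>\<T>. L2 T)" unfolding L2_def
      by (rule nn_integral_sum) (use Tsets in measurable)
    also have "\<dots> \<le> (\<Sum>T\<in>\<T>. ennreal (fac T) * L2 T)"
    proof (rule sum_mono)
      fix T assume "T \<in> \<T>"
      then have "ennreal 1 \<le> ennreal (fac T)" using fac1 by (intro ennreal_leI) auto
      then have "1 * L2 T \<le> ennreal (fac T) * L2 T" by (intro mult_right_mono) auto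
      then show "L2 T \<le> ennreal (fac T) * L2 T" by simp
    qed
    finally show ?thesis .
  qed
  have comb: "ennreal (2 * (K * (diameter T / Ccent) powr (-2 * \<sigma>))) * L2 T
       + ennreal (2 * (K * (diameter T / Ccent) powr (-2 * \<sigma>))) * L2 T + ennreal (fac T) * L2 T
     = ennreal ((4 * K * Ccent powr (2 * \<sigma>) + diameter \<Gamma> powr (2 * \<sigma>)) * diameter T powr (-2 * \<sigma>)) * L2 T"
    if T: "T \<in> \<T>" for T
  proof -
    have dT: "diameter T > 0" using dpos T by blast
    have a0: "0 \<le> 2 * (K * (diameter T / Ccent) powr (-2 * \<sigma>))" using K0 by simp
    have f0: "0 \<le> fac T" using fac1[OF T] by simp
    have "ennreal (2 * (K * (diameter T / Ccent) powr (-2 * \<sigma>))) * L2 T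
       + ennreal (2 * (K * (diameter T / Ccent) powr (-2 * \<sigma>))) * L2 T + ennreal (fac T) * L2 T
       = (ennreal (2 * (K * (diameter T / Ccent) powr (-2 * \<sigma>))) + ennreal (2 * (K * (diameter T / Ccent) powr (-2 * \<sigma>)))
          + ennreal (fac T)) * L2 T"
      by (simp only: distrib_right)
    also have "ennreal (2 * (K * (diameter T / Ccent) powr (-2 * \<sigma>))) + ennreal (2 * (K * (diameter T / Ccent) powr (-2 * \<sigma>)))
          + ennreal (fac T) = ennreal (2 * (K * (diameter T / Ccent) powr (-2 * \<sigma>)) + 2 * (K * (diameter T / Ccent) powr (-2 * \<sigma>)) + fac T)"
      by (simp only: ennreal_plus[OF a0 a0, symmetric] ennreal_plus[OF add_nonneg_nonneg[OF a0 a0] f0, symmetric])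
    also have "2 * (K * (diameter T / Ccent) powr (-2 * \<sigma>)) + 2 * (K * (diameter T / Ccent) powr (-2 * \<sigma>)) + fac T
        = (4 * K * Ccent powr (2 * \<sigma>) + diameter \<Gamma> powr (2 * \<sigma>)) * diameter T powr (-2 * \<sigma>)"
    proof -
      have "(diameter T / Ccent) powr (-2 * \<sigma>) = diameter T powr (-2 * \<sigma>) / Ccent powr (-2 * \<sigma>)"
        using dT Cc by (simp add: powr_divide)
      also have "\<dots> = diameter T powr (-2 * \<sigma>) * Ccent powr (2 * \<sigma>)"
        using Cc by (simp add: powr_minus divide_inverse)
      finally have "(diameter T / Ccent) powr (-2 * \<sigma>) = diameter T powr (-2 * \<sigma>) * Ccent powr (2 * \<sigma>)" .
      then show ?thesis by (simp add: fac_def algebra_simps)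
    qed
    finally show ?thesis .
  qed
  have "(\<integral>\<^sup>+p. indicator (\<Gamma> \<times> \<Gamma>) p * fp p \<partial>(M \<Otimes>\<^sub>M M)) + (\<integral>\<^sup>+x. indicator \<Gamma> x * ennreal ((u x)\<^sup>2) \<partial>M)
     \<le> (\<Sum>T\<in>\<T>. \<Sum>T'\<in>patch_elems \<T> T. \<integral>\<^sup>+p. indicator ((T \<union> T') \<times> (T \<union> T')) p * fp p \<partial>(M \<Otimes>\<^sub>M M))
      + ((\<Sum>T\<in>\<T>. ennreal (2 * (K * (diameter T / Ccent) powr (-2 * \<sigma>))) * L2 T
       + ennreal (2 * (K * (diameter T / Ccent) powr (-2 * \<sigma>))) * L2 T) + (\<Sum>T\<in>\<T>. ennreal (fac T) * L2 T))"
    using add_mono[OF Semi L2part] by (simp add: add.assoc)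
  also have "(\<Sum>T\<in>\<T>. ennreal (2 * (K * (diameter T / Ccent) powr (-2 * \<sigma>))) * L2 T
       + ennreal (2 * (K * (diameter T / Ccent) powr (-2 * \<sigma>))) * L2 T) + (\<Sum>T\<in>\<T>. ennreal (fac T) * L2 T)
     = (\<Sum>T\<in>\<T>. ennreal ((4 * K * Ccent powr (2 * \<sigma>) + diameter \<Gamma> powr (2 * \<sigma>)) * diameter T powr (-2 * \<sigma>)) * L2 T)"
    unfolding sum.distrib[symmetric] by (rule sum.cong[OF refl]) (rule comb)
  finally show ?thesis unfolding M_def fp_def L2_def .
qed

lemma mesh_diam_pos:
  fixes T :: "'a::euclidean_space set" and That :: "'b::euclidean_space set"
  assumes "compact T" "compact_lipschitz_domain That" "bi_lipschitz_on That \<gamma>" "T = \<gamma> ` That"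
  shows "diameter T > 0"
proof -
  obtain U where U: "bounded_lipschitz_domain U" "That = closure U" using assms(2) by (auto simp: compact_lipschitz_domain_def)
  have oU: "open U" and neU: "U \<noteq> {}" using U(1) by (auto simp: bounded_lipschitz_domain_def)
  obtain a where a: "a \<in> U" using neU by blast
  obtain r where r: "r > 0" "ball a r \<subseteq> U" using oU a open_contains_ball by blast
  obtain b :: 'b where b: "b \<in> Basis" using nonempty_Basis by blast
  define a' where "a' = a + (r / 2) *\<^sub>R b"
  have "dist a a' = r / 2" using b r by (simp add: a'_def dist_norm)
  then have aa': "a' \<in> U" "dist a a' > 0" using r by auto
  have inT: "a \<in> That" "a' \<in> That" using a aa'(1) U(2) closure_subset by auto
  obtain L where L: "L > 0" "\<forall>x\<in>That. \<forall>y\<in>That. dist x y \<le> L * dist (\<gamma> x) (\<gamma> y) \<and> dist (\<gamma> x) (\<gamma> y) \<le> L * dist x y"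
    using assms(3) by (auto simp: bi_lipschitz_on_def)
  have "dist a a' \<le> L * dist (\<gamma> a) (\<gamma> a')" using L(2) inT by blast
  then have pos: "dist (\<gamma> a) (\<gamma> a') > 0" using aa'(2) L(1)
    by (metis dist_not_less_zero dist_pos_lt less_eq_real_def mult_zero_right not_less)
  have "dist (\<gamma> a) (\<gamma> a') \<le> diameter T"
    using diameter_bounded_bound[OF compact_imp_bounded[OF assms(1)]] inT assms(4) by blast
  then show ?thesis using pos by linarith
qed

lemma sm_finite:
  fixes \<Omega> :: "'a::euclidean_space set"
  assumes dim: "DIM('a) \<ge> 2" and bl: "bounded_lipschitz_domain \<Omega>"
  shows "finite_measure (surface_measure (frontier \<Omega>))"
proof (rule finite_measureI)
  define \<Gamma> where "\<Gamma> = frontier \<Omega>"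
  have bG: "bounded \<Gamma>" using bl using compact_frontier_bounded[of \<Omega>] compact_imp_bounded by (auto simp: \<Gamma>_def bounded_lipschitz_domain_def)
  show "emeasure (surface_measure (frontier \<Omega>)) (space (surface_measure (frontier \<Omega>))) \<noteq> \<infinity>"
  proof (cases "\<Gamma> = {}")
    case True then show ?thesis by (simp add: \<Gamma>_def[symmetric] sm_space)
  next
    case False
    then obtain y where y: "y \<in> \<Gamma>" by blast
    obtain A where A: "A > 0" "\<forall>y\<in>\<Gamma>. \<forall>\<rho>>0. hausdorff_measure (real DIM('a) - 1) (\<Gamma> \<inter> cball y \<rho>) \<le> ennreal (A * \<rho> powr (real DIM('a) - 1))"
      using regularity[OF dim bl] unfolding \<Gamma>_def by blast
    define R where "R = diameter \<Gamma> + 1"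
    have R0: "R > 0" using diameter_ge_0[OF bG] by (simp add: R_def)
    have "\<Gamma> \<subseteq> cball y R"
    proof
      fix z assume "z \<in> \<Gamma>"
      then have "dist y z \<le> diameter \<Gamma>" using diameter_bounded_bound[OF bG y] by blast
      then show "z \<in> cball y R" by (simp add: R_def)
    qed
    then have eq: "\<Gamma> \<inter> cball y R = \<Gamma>" by blast
    have "emeasure (surface_measure \<Gamma>) \<Gamma> \<le> hausdorff_measure (real DIM('a) - 1) \<Gamma>" by (rule sm_le_H)
    also have "\<dots> \<le> ennreal (A * R powr (real DIM('a) - 1))" using A(2) y R0 eq by metis
    finally show ?thesis by (auto simp: \<Gamma>_def[symmetric] sm_space top_unique)
  qed
qed

theorem lemma4p5:
  fixes \<Omega> :: "'a::euclidean_space set" and \<sigma> Ccent :: real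
  assumes "DIM('a) \<ge> 2" and "DIM('b::euclidean_space) + 1 = DIM('a)"
    and "bounded_lipschitz_domain \<Omega>"
    and "0 < \<sigma>" and "\<sigma> < 1"
  shows "\<exists>C>0. \<forall>\<T> (D::nat) v.
     is_mesh TYPE('b) (frontier \<Omega>) \<T> \<longrightarrow> M4 (frontier \<Omega>) Ccent \<T> \<longrightarrow>
     in_Hs (frontier \<Omega>) \<sigma> D v \<longrightarrow>
     Hs_norm_sq (frontier \<Omega>) \<sigma> D v (frontier \<Omega>)
       \<le> (\<Sum>T\<in>\<T>. \<Sum>T'\<in>patch_elems \<T> T. Hs_semi_sq (frontier \<Omega>) \<sigma> D v (T \<union> T'))
         + ennreal C * (\<Sum>T\<in>\<T>. ennreal (diameter T powr (- 2 * \<sigma>)) * L2_sq (frontier \<Omega>) D v T)"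
proof -
  note dim = assms(1) and bl = assms(3) and sig = assms(4)
  define \<Gamma> where "\<Gamma> = frontier \<Omega>"
  define t where "t = real DIM('a) - 1 + 2 * \<sigma>"
  have clG: "closed \<Gamma>" by (simp add: \<Gamma>_def)
  have bG: "bounded \<Gamma>" using bl compact_frontier_bounded[of \<Omega>] compact_imp_bounded
    by (auto simp: \<Gamma>_def bounded_lipschitz_domain_def)
  obtain K where K: "K \<ge> 0" "\<forall>x\<in>\<Gamma>. \<forall>\<delta>>0. (\<integral>\<^sup>+y. indicator {y. \<delta> \<le> dist x y} y * ennreal (1 / dist x y powr t)
       \<partial>surface_measure \<Gamma>) \<le> ennreal (K * \<delta> powr (-2 * \<sigma>))"
    using inner_bound[OF dim bl sig, folded \<Gamma>_def t_def] by blast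
  have fm: "finite_measure (surface_measure \<Gamma>)" unfolding \<Gamma>_def by (rule sm_finite[OF dim bl])
  define C where "C = 4 * K * \<bar>Ccent\<bar> powr (2 * \<sigma>) + diameter \<Gamma> powr (2 * \<sigma>) + 1"
  have Cpos: "C > 0" using K(1) by (simp add: C_def add_nonneg_pos)
  have main: "Hs_norm_sq \<Gamma> \<sigma> D v \<Gamma>
       \<le> (\<Sum>T\<in>\<T>. \<Sum>T'\<in>patch_elems \<T> T. Hs_semi_sq \<Gamma> \<sigma> D v (T \<union> T'))
         + ennreal C * (\<Sum>T\<in>\<T>. ennreal (diameter T powr (- 2 * \<sigma>)) * L2_sq \<Gamma> D v T)"
    if mesh: "is_mesh TYPE('b) \<Gamma> \<T>" and m4: "M4 \<Gamma> Ccent \<T>" and hs: "in_Hs \<Gamma> \<sigma> D v" for \<T> D v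
  proof -
    have fin: "finite \<T>" and cov: "\<Union>\<T> = \<Gamma>"
      and Tprop: "\<forall>T\<in>\<T>. compact T \<and> T \<subseteq> \<Gamma> \<and>
        (\<exists>(That :: 'b set) \<gamma>. compact_lipschitz_domain That \<and> bi_lipschitz_on That \<gamma> \<and> T = \<gamma> ` That)"
      using mesh by (auto simp: is_mesh_def)
    have dpos: "\<forall>T\<in>\<T>. diameter T > 0"
    proof
      fix T assume "T \<in> \<T>"
      have TT: "compact T \<and> T \<subseteq> \<Gamma> \<and>
        (\<exists>(That :: 'b set) \<gamma>. compact_lipschitz_domain That \<and> bi_lipschitz_on That \<gamma> \<and> T = \<gamma> ` That)"
        using Tprop \<open>T \<in> \<T>\<close> by (rule bspec)
      then obtain That :: "'b set" and \<gamma> where P: "compact_lipschitz_domain That \<and> bi_lipschitz_on That \<gamma> \<and> T = \<gamma> ` That"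
        by (elim conjE exE) blast
      show "diameter T > 0" using TT P by (intro mesh_diam_pos[of T That \<gamma>]) simp_all
    qed
    have Tc: "\<forall>T\<in>\<T>. closed T" using Tprop by (simp add: compact_imp_closed)
    show ?thesis
    proof (cases "\<T> = {}")
      case True
      then have "\<Gamma> = {}" using cov by simp
      then show ?thesis by (simp add: Hs_norm_sq_def L2_sq_def Hs_semi_sq_def)
    next
      case False
      then obtain T0 where T0: "T0 \<in> \<T>" by blast
      have Cc: "Ccent > 0"
      proof (rule ccontr)
        assume "\<not> Ccent > 0"
        moreover have "0 \<le> dist_set \<Gamma> T0 (\<Gamma> - patch \<T> T0)"
          using diameter_ge_0[OF bG] by (simp add: dist_set_def)
        ultimately have "Ccent * dist_set \<Gamma> T0 (\<Gamma> - patch \<T> T0) \<le> 0"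
          by (simp add: mult_nonpos_nonneg)
        moreover have "diameter T0 \<le> Ccent * dist_set \<Gamma> T0 (\<Gamma> - patch \<T> T0)" using m4 T0 by (simp add: M4_def)
        ultimately show False using dpos T0 by fastforce
      qed
      define Near where "Near j = (\<Sum>T\<in>\<T>. \<Sum>T'\<in>patch_elems \<T> T. \<integral>\<^sup>+p. indicator ((T \<union> T') \<times> (T \<union> T')) p *
            ennreal ((v (fst p) j - v (snd p) j)\<^sup>2 / dist (fst p) (snd p) powr t) \<partial>(surface_measure \<Gamma> \<Otimes>\<^sub>M surface_measure \<Gamma>))" for j
      define cc where "cc = 4 * K * Ccent powr (2 * \<sigma>) + diameter \<Gamma> powr (2 * \<sigma>)"
      define L2j where "L2j j T = (\<integral>\<^sup>+x. indicator T x * ennreal ((v x j)\<^sup>2) \<partial>surface_measure \<Gamma>)" for j T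
      define Sj where "Sj j w = (\<integral>\<^sup>+p. indicator (w \<times> w) p * ennreal ((v (fst p) j - v (snd p) j)\<^sup>2 / dist (fst p) (snd p) powr t)
             \<partial>(surface_measure \<Gamma> \<Otimes>\<^sub>M surface_measure \<Gamma>))" for j w
      have pj: "Sj j \<Gamma> + L2j j \<Gamma> \<le> Near j + (\<Sum>T\<in>\<T>. ennreal (cc * diameter T powr (-2 * \<sigma>)) * L2j j T)"
        if "j < D" for j
      proof -
        have um: "(\<lambda>x. v x j) \<in> borel_measurable (surface_measure \<Gamma>)" using hs that by (simp add: in_Hs_def)
        show ?thesis
          using per_j[OF clG bG fin cov Tc dpos Cc m4 K(1) sig K(2) fm um]
          unfolding Sj_def L2j_def Near_def cc_def by simp
      qed
      have LHS: "Hs_norm_sq \<Gamma> \<sigma> D v \<Gamma> = (\<Sum>j<D. Sj j \<Gamma> + L2j j \<Gamma>)"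
      proof -
        have "Hs_norm_sq \<Gamma> \<sigma> D v \<Gamma> = (\<Sum>j<D. L2j j \<Gamma>) + (\<Sum>j<D. Sj j \<Gamma>)"
          unfolding Hs_norm_sq_def L2_sq_def Hs_semi_sq_def Sj_def L2j_def t_def by (rule refl)
        also have "\<dots> = (\<Sum>j<D. Sj j \<Gamma>) + (\<Sum>j<D. L2j j \<Gamma>)" by (rule add.commute)
        also have "\<dots> = (\<Sum>j<D. Sj j \<Gamma> + L2j j \<Gamma>)" by (rule sum.distrib[symmetric])
        finally show ?thesis .
      qed
      have "Hs_norm_sq \<Gamma> \<sigma> D v \<Gamma> \<le> (\<Sum>j<D. Near j + (\<Sum>T\<in>\<T>. ennreal (cc * diameter T powr (-2 * \<sigma>)) * L2j j T))"
        unfolding LHS by (rule sum_mono) (rule pj, simp)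
      also have "\<dots> = (\<Sum>j<D. Near j) + (\<Sum>j<D. \<Sum>T\<in>\<T>. ennreal (cc * diameter T powr (-2 * \<sigma>)) * L2j j T)"
        by (rule sum.distrib)
      also have "(\<Sum>j<D. Near j) = (\<Sum>T\<in>\<T>. \<Sum>T'\<in>patch_elems \<T> T. Hs_semi_sq \<Gamma> \<sigma> D v (T \<union> T'))"
      proof -
        have "(\<Sum>j<D. Near j) = (\<Sum>T\<in>\<T>. \<Sum>j<D. \<Sum>T'\<in>patch_elems \<T> T. Sj j (T \<union> T'))"
          unfolding Near_def Sj_def by (rule sum.swap)
        also have "\<dots> = (\<Sum>T\<in>\<T>. \<Sum>T'\<in>patch_elems \<T> T. \<Sum>j<D. Sj j (T \<union> T'))"
          by (intro sum.cong refl sum.swap)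
        also have "\<dots> = (\<Sum>T\<in>\<T>. \<Sum>T'\<in>patch_elems \<T> T. Hs_semi_sq \<Gamma> \<sigma> D v (T \<union> T'))"
          by (simp add: Hs_semi_sq_def Sj_def t_def)
        finally show ?thesis .
      qed
      also have "(\<Sum>j<D. \<Sum>T\<in>\<T>. ennreal (cc * diameter T powr (-2 * \<sigma>)) * L2j j T)
          \<le> ennreal C * (\<Sum>T\<in>\<T>. ennreal (diameter T powr (- 2 * \<sigma>)) * L2_sq \<Gamma> D v T)"
      proof -
        have "(\<Sum>j<D. \<Sum>T\<in>\<T>. ennreal (cc * diameter T powr (-2 * \<sigma>)) * L2j j T)
            = (\<Sum>T\<in>\<T>. ennreal (cc * diameter T powr (-2 * \<sigma>)) * L2_sq \<Gamma> D v T)"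
        proof -
          have "(\<Sum>j<D. \<Sum>T\<in>\<T>. ennreal (cc * diameter T powr (-2 * \<sigma>)) * L2j j T)
              = (\<Sum>T\<in>\<T>. \<Sum>j<D. ennreal (cc * diameter T powr (-2 * \<sigma>)) * L2j j T)" by (rule sum.swap)
          also have "\<dots> = (\<Sum>T\<in>\<T>. ennreal (cc * diameter T powr (-2 * \<sigma>)) * (\<Sum>j<D. L2j j T))"
            by (simp only: sum_distrib_left)
          also have "\<dots> = (\<Sum>T\<in>\<T>. ennreal (cc * diameter T powr (-2 * \<sigma>)) * L2_sq \<Gamma> D v T)"
            unfolding L2_sq_def L2j_def by (rule refl)
          finally show ?thesis .
        qed
        also have "\<dots> \<le> (\<Sum>T\<in>\<T>. ennreal C * (ennreal (diameter T powr (- 2 * \<sigma>)) * L2_sq \<Gamma> D v T))"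
        proof (rule sum_mono)
          fix T assume "T \<in> \<T>"
          have "cc \<le> C" using Cc by (simp add: cc_def C_def)
          then have "cc * diameter T powr (-2 * \<sigma>) \<le> C * diameter T powr (-2 * \<sigma>)"
            by (rule mult_right_mono) simp
          then have "ennreal (cc * diameter T powr (-2 * \<sigma>)) \<le> ennreal C * ennreal (diameter T powr (-2 * \<sigma>))"
            using Cpos by (simp add: ennreal_mult[symmetric] ennreal_leI)
          then show "ennreal (cc * diameter T powr (-2 * \<sigma>)) * L2_sq \<Gamma> D v T
              \<le> ennreal C * (ennreal (diameter T powr (- 2 * \<sigma>)) * L2_sq \<Gamma> D v T)"
            by (simp add: mult.assoc[symmetric] mult_right_mono)
        qed
        also have "\<dots> = ennreal C * (\<Sum>T\<in>\<T>. ennreal (diameter T powr (- 2 * \<sigma>)) * L2_sq \<Gamma> D v T)"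
          by (simp add: sum_distrib_left)
        finally show ?thesis .
      qed
      finally show ?thesis by (simp add: add_mono)
    qed
  qed
  show ?thesis
    by (rule exI[of _ C]) (use Cpos main in \<open>simp add: \<Gamma>_def\<close>)
qed

end
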